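(* Let $\Lambda$ be a left-artinian ring, $\mathcal{C}=\mathrm{mod}(\Lambda)$, $\mathcal{S}$ a set of (isoclasses of) simple $\Lambda$-modules and $M\in\mathcal{C}$. If $t_{\mathcal{S}}(M)\neq0$ then $\ell\ell^{t_{\mathcal{S}}}(\Omega\, t_{\mathcal{S}}(M))\leq\ell\ell^{t_{\mathcal{S}}}({}_\Lambda\Lambda)-1$.
   Context: $\mathcal{C}$ is the category of finitely generated left $\Lambda$-modules; $\Omega(N)$ denotes the first syzygy of $N$, i.e. the kernel of the projective cover $P\to N$. For a set $\mathcal{S}$ of simple modules, $\mathcal{X}_{\mathcal{S}}$ is the class of modules with a finite filtration whose factors are isomorphic to modules in $\mathcal{S}$; $\mathcal{T}_{\mathcal{S}}=\{M:\mathrm{Hom}_\Lambda(M,X)=0\ \forall X\in\mathcal{X}_{\mathcal{S}}\}$; $t_{\mathcal{S}}(M)$ is the submodule generated by images of maps $T\to M$, $T\in\mathcal{T}_{\mathcal{S}}$. $\ell\ell^{t_{\mathcal{S}}}(M)=\min\{i\geq0:t_{\mathcal{S}}\circ(\mathrm{rad}\circ t_{\mathcal{S}})^i(M)=0\}$. *)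

theory Defs
  imports Main
begin

record ('r, 'm) lmod =
  mcarrier :: "'m set"
  madd :: "'m \<Rightarrow> 'm \<Rightarrow> 'm"
  mzero :: 'm
  msmult :: "'r \<Rightarrow> 'm \<Rightarrow> 'm"

definition lmodule :: "('r::ring_1, 'm) lmod \<Rightarrow> bool" where
  "lmodule M \<longleftrightarrow>
     mzero M \<in> mcarrier M \<and>
     (\<forall>x\<in>mcarrier M. \<forall>y\<in>mcarrier M. madd M x y \<in> mcarrier M) \<and>
     (\<forall>r. \<forall>x\<in>mcarrier M. msmult M r x \<in> mcarrier M) \<and>
     (\<forall>x\<in>mcarrier M. \<forall>y\<in>mcarrier M. \<forall>z\<in>mcarrier M.
         madd M (madd M x y) z = madd M x (madd M y z)) \<and>
     (\<forall>x\<in>mcarrier M. \<forall>y\<in>mcarrier M. madd M x y = madd M y x) \<and>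
     (\<forall>x\<in>mcarrier M. madd M (mzero M) x = x) \<and>
     (\<forall>x\<in>mcarrier M. madd M x (msmult M (-1) x) = mzero M) \<and>
     (\<forall>r. \<forall>x\<in>mcarrier M. \<forall>y\<in>mcarrier M.
         msmult M r (madd M x y) = madd M (msmult M r x) (msmult M r y)) \<and>
     (\<forall>r s. \<forall>x\<in>mcarrier M. msmult M (r + s) x = madd M (msmult M r x) (msmult M s x)) \<and>
     (\<forall>r s. \<forall>x\<in>mcarrier M. msmult M (r * s) x = msmult M r (msmult M s x)) \<and>
     (\<forall>x\<in>mcarrier M. msmult M 1 x = x)"

definition sub :: "('r, 'm) lmod \<Rightarrow> 'm set \<Rightarrow> ('r, 'm) lmod" where
  "sub M N = M\<lparr>mcarrier := N\<rparr>"

definition submod :: "('r::ring_1, 'm) lmod \<Rightarrow> 'm set \<Rightarrow> bool" where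
  "submod M N \<longleftrightarrow> N \<subseteq> mcarrier M \<and> mzero M \<in> N \<and>
     (\<forall>x\<in>N. \<forall>y\<in>N. madd M x y \<in> N) \<and> (\<forall>r. \<forall>x\<in>N. msmult M r x \<in> N)"

definition span :: "('r::ring_1, 'm) lmod \<Rightarrow> 'm set \<Rightarrow> 'm set" where
  "span M A = mcarrier M \<inter> \<Inter> {N. submod M N \<and> A \<subseteq> N}"

definition fin_gen :: "('r::ring_1, 'm) lmod \<Rightarrow> bool" where
  "fin_gen M \<longleftrightarrow> (\<exists>A. finite A \<and> A \<subseteq> mcarrier M \<and> span M A = mcarrier M)"

definition lhom :: "('r::ring_1, 'm) lmod \<Rightarrow> ('r, 'n) lmod \<Rightarrow> ('m \<Rightarrow> 'n) \<Rightarrow> bool" where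
  "lhom M N f \<longleftrightarrow> (\<forall>x\<in>mcarrier M. f x \<in> mcarrier N) \<and>
     (\<forall>x\<in>mcarrier M. \<forall>y\<in>mcarrier M. f (madd M x y) = madd N (f x) (f y)) \<and>
     (\<forall>r. \<forall>x\<in>mcarrier M. f (msmult M r x) = msmult N r (f x))"

definition ker :: "('r, 'm) lmod \<Rightarrow> ('r, 'n) lmod \<Rightarrow> ('m \<Rightarrow> 'n) \<Rightarrow> 'm set" where
  "ker M N f = {x \<in> mcarrier M. f x = mzero N}"

definition simple_mod :: "('r::ring_1, 'm) lmod \<Rightarrow> bool" where
  "simple_mod M \<longleftrightarrow> lmodule M \<and> mcarrier M \<noteq> {mzero M} \<and>
     (\<forall>N. submod M N \<longrightarrow> N = {mzero M} \<or> N = mcarrier M)"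

text \<open>Universal carrier type for finitely generated modules: every finitely generated
  left 'r-module is isomorphic to one whose carrier consists of cosets of a submodule of
  the finitely supported functions nat => 'r, i.e. elements of type (nat => 'r) set.\<close>
type_synonym 'r umod = "('r, (nat \<Rightarrow> 'r) set) lmod"

text \<open>X has a finite filtration 0 = X_0 <= ... <= X_n = X whose factors X_(i+1)/X_i are
  isomorphic to members of S (isomorphism with the quotient expressed as a surjective
  homomorphism X_(i+1) -> S with kernel X_i).\<close>
definition filt_in :: "('r::ring_1) umod set \<Rightarrow> ('r, 'm) lmod \<Rightarrow> bool" where
  "filt_in \<S> X \<longleftrightarrow> (\<exists>n Xs. Xs 0 = {mzero X} \<and> Xs n = mcarrier X \<and>
     (\<forall>i\<le>n. submod X (Xs i)) \<and>
     (\<forall>i<n. Xs i \<subseteq> Xs (Suc i) \<and>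
        (\<exists>S\<in>\<S>. \<exists>f. lhom (sub X (Xs (Suc i))) S f \<and> f ` Xs (Suc i) = mcarrier S \<and>
                    ker (sub X (Xs (Suc i))) S f = Xs i)))"

definition in_X :: "('r::ring_1) umod set \<Rightarrow> ('r, 'm) lmod \<Rightarrow> bool" where
  "in_X \<S> X \<longleftrightarrow> lmodule X \<and> fin_gen X \<and> filt_in \<S> X"

definition in_T :: "('r::ring_1) umod set \<Rightarrow> ('r, 'm) lmod \<Rightarrow> bool" where
  "in_T \<S> T \<longleftrightarrow> (\<forall>X :: 'r umod. in_X \<S> X \<longrightarrow>
      (\<forall>f. lhom T X f \<longrightarrow> (\<forall>x\<in>mcarrier T. f x = mzero X)))"

definition tS :: "('r::ring_1) umod set \<Rightarrow> ('r, 'm) lmod \<Rightarrow> 'm set" where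
  "tS \<S> M = span M (\<Union> {f ` mcarrier T | (T :: 'r umod) f.
       lmodule T \<and> fin_gen T \<and> in_T \<S> T \<and> lhom T M f})"

text \<open>Radical: intersection of maximal submodules (M itself if there are none).\<close>
definition maxsub :: "('r::ring_1, 'm) lmod \<Rightarrow> 'm set \<Rightarrow> bool" where
  "maxsub M N \<longleftrightarrow> submod M N \<and> N \<noteq> mcarrier M \<and>
     (\<forall>L. submod M L \<and> N \<subseteq> L \<longrightarrow> L = N \<or> L = mcarrier M)"

definition rad :: "('r::ring_1, 'm) lmod \<Rightarrow> 'm set" where
  "rad M = mcarrier M \<inter> \<Inter> {N. maxsub M N}"

definition rad_tS :: "('r::ring_1) umod set \<Rightarrow> ('r, 'm) lmod \<Rightarrow> 'm set \<Rightarrow> 'm set" where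
  "rad_tS \<S> M N = rad (sub M (tS \<S> (sub M N)))"

definition llt :: "('r::ring_1) umod set \<Rightarrow> ('r, 'm) lmod \<Rightarrow> nat" where
  "llt \<S> M = (LEAST i. tS \<S> (sub M ((rad_tS \<S> M ^^ i) (mcarrier M))) = {mzero M})"

definition regmod :: "('r::ring_1, 'r) lmod" where
  "regmod = \<lparr>mcarrier = UNIV, madd = (+), mzero = 0, msmult = (*)\<rparr>"

definition artinian :: "('r::ring_1, 'm) lmod \<Rightarrow> bool" where
  "artinian M \<longleftrightarrow> \<not> (\<exists>I. \<forall>n. submod M (I n) \<and> I (Suc n) \<subset> I n)"

definition projective :: "('r::ring_1, 'p) lmod \<Rightarrow> bool" where
  "projective P \<longleftrightarrow> lmodule P \<and> fin_gen P \<and>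
     (\<forall>(A :: 'r umod) (B :: 'r umod) g h.
        lmodule A \<and> fin_gen A \<and> lmodule B \<and> fin_gen B \<and>
        lhom A B g \<and> g ` mcarrier A = mcarrier B \<and> lhom P B h \<longrightarrow>
        (\<exists>k. lhom P A k \<and> (\<forall>x\<in>mcarrier P. g (k x) = h x)))"

definition superfluous :: "('r::ring_1, 'm) lmod \<Rightarrow> 'm set \<Rightarrow> bool" where
  "superfluous M K \<longleftrightarrow> submod M K \<and>
     (\<forall>L. submod M L \<and> span M (K \<union> L) = mcarrier M \<longrightarrow> L = mcarrier M)"

definition proj_cover :: "('r::ring_1, 'p) lmod \<Rightarrow> ('r, 'n) lmod \<Rightarrow> ('p \<Rightarrow> 'n) \<Rightarrow> bool" where
  "proj_cover P N f \<longleftrightarrow> projective P \<and> lhom P N f \<and> f ` mcarrier P = mcarrier N \<and>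
     superfluous P (ker P N f)"

end

theory Submission
  imports Defs
begin

lemma sub_simps[simp]: "mcarrier (sub M N) = N" "madd (sub M N) = madd M" "mzero (sub M N) = mzero M"
  "msmult (sub M N) = msmult M" "sub (sub M A) B = sub M B" "sub M (mcarrier M) = M"
  by (auto simp: sub_def)

context fixes M :: "('r::ring_1, 'm) lmod" assumes LM: "lmodule M" begin

lemma lm_zero[simp]: "mzero M \<in> mcarrier M" using LM by (simp add: lmodule_def)
lemma lm_add[simp]: "x \<in> mcarrier M \<Longrightarrow> y \<in> mcarrier M \<Longrightarrow> madd M x y \<in> mcarrier M" using LM[unfolded lmodule_def, THEN conjunct2, THEN conjunct1] by blast
lemma lm_smult[simp]: "x \<in> mcarrier M \<Longrightarrow> msmult M r x \<in> mcarrier M" using LM[unfolded lmodule_def, THEN conjunct2, THEN conjunct2, THEN conjunct1] by blast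
lemma lm_assoc: "x \<in> mcarrier M \<Longrightarrow> y \<in> mcarrier M \<Longrightarrow> z \<in> mcarrier M \<Longrightarrow> madd M (madd M x y) z = madd M x (madd M y z)" using LM[unfolded lmodule_def, THEN conjunct2, THEN conjunct2, THEN conjunct2, THEN conjunct1] by blast
lemma lm_comm: "x \<in> mcarrier M \<Longrightarrow> y \<in> mcarrier M \<Longrightarrow> madd M x y = madd M y x" using LM[unfolded lmodule_def, THEN conjunct2, THEN conjunct2, THEN conjunct2, THEN conjunct2, THEN conjunct1] by blast
lemma lm_lzero[simp]: "x \<in> mcarrier M \<Longrightarrow> madd M (mzero M) x = x" using LM[unfolded lmodule_def, THEN conjunct2, THEN conjunct2, THEN conjunct2, THEN conjunct2, THEN conjunct2, THEN conjunct1] by blast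
lemma lm_neg: "x \<in> mcarrier M \<Longrightarrow> madd M x (msmult M (-1) x) = mzero M" using LM[unfolded lmodule_def, THEN conjunct2, THEN conjunct2, THEN conjunct2, THEN conjunct2, THEN conjunct2, THEN conjunct2, THEN conjunct1] by blast
lemma lm_sdistl: "x \<in> mcarrier M \<Longrightarrow> y \<in> mcarrier M \<Longrightarrow> msmult M r (madd M x y) = madd M (msmult M r x) (msmult M r y)" using LM[unfolded lmodule_def, THEN conjunct2, THEN conjunct2, THEN conjunct2, THEN conjunct2, THEN conjunct2, THEN conjunct2, THEN conjunct2, THEN conjunct1] by blast
lemma lm_sdistr: "x \<in> mcarrier M \<Longrightarrow> msmult M (r + s) x = madd M (msmult M r x) (msmult M s x)" using LM[unfolded lmodule_def, THEN conjunct2, THEN conjunct2, THEN conjunct2, THEN conjunct2, THEN conjunct2, THEN conjunct2, THEN conjunct2, THEN conjunct2, THEN conjunct1] by blast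
lemma lm_smass: "x \<in> mcarrier M \<Longrightarrow> msmult M (r * s) x = msmult M r (msmult M s x)" using LM[unfolded lmodule_def, THEN conjunct2, THEN conjunct2, THEN conjunct2, THEN conjunct2, THEN conjunct2, THEN conjunct2, THEN conjunct2, THEN conjunct2, THEN conjunct2, THEN conjunct1] by blast
lemma lm_one[simp]: "x \<in> mcarrier M \<Longrightarrow> msmult M 1 x = x" using LM[unfolded lmodule_def, THEN conjunct2, THEN conjunct2, THEN conjunct2, THEN conjunct2, THEN conjunct2, THEN conjunct2, THEN conjunct2, THEN conjunct2, THEN conjunct2, THEN conjunct2] by blast

lemma lm_rzero[simp]: "x \<in> mcarrier M \<Longrightarrow> madd M x (mzero M) = x"
  using lm_comm[of x "mzero M"] by simp

lemma lm_neg2: "x \<in> mcarrier M \<Longrightarrow> madd M (msmult M (-1) x) x = mzero M"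
  using lm_comm lm_neg by (metis lm_smult)

lemma lm_cancel: assumes "x \<in> mcarrier M" "y \<in> mcarrier M" "z \<in> mcarrier M" "madd M x y = madd M x z"
  shows "y = z"
proof -
  have "y = madd M (madd M (msmult M (-1) x) x) y" using assms by (simp add: lm_neg2)
  also have "\<dots> = madd M (msmult M (-1) x) (madd M x y)" using assms by (simp add: lm_assoc)
  also have "\<dots> = madd M (msmult M (-1) x) (madd M x z)" using assms by simp
  also have "\<dots> = madd M (madd M (msmult M (-1) x) x) z" using assms by (simp add: lm_assoc)
  also have "\<dots> = z" using assms by (simp add: lm_neg2)
  finally show ?thesis .
qed

lemma lm_smult_zero[simp]: "x \<in> mcarrier M \<Longrightarrow> msmult M 0 x = mzero M"
proof -
  assume x: "x \<in> mcarrier M"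
  have "madd M (msmult M 0 x) (msmult M 0 x) = madd M (msmult M 0 x) (mzero M)"
    using x lm_sdistr[of x 0 0] by simp
  then show ?thesis using x lm_cancel by (meson lm_smult lm_zero)
qed

lemma lm_eq_diff: assumes "x \<in> mcarrier M" "y \<in> mcarrier M" "madd M x (msmult M (-1) y) = mzero M"
  shows "x = y"
proof -
  have "x = madd M x (madd M (msmult M (-1) y) y)" using assms by (subst lm_neg2) auto
  also have "\<dots> = madd M (madd M x (msmult M (-1) y)) y" using assms by (metis lm_assoc lm_smult)
  also have "\<dots> = y" using assms by simp
  finally show ?thesis .
qed

lemma lm_diff_add: "x \<in> mcarrier M \<Longrightarrow> y \<in> mcarrier M \<Longrightarrow> madd M (madd M x (msmult M (-1) y)) y = x"
  by (metis lm_assoc lm_smult lm_neg2 lm_rzero)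

lemma submod_module: "submod M N \<Longrightarrow> lmodule (sub M N)"
  using LM unfolding submod_def lmodule_def by (auto simp: subset_iff)

lemma span_submod: "submod M (span M A)"
  unfolding span_def submod_def by auto

lemma span_sup: "A \<subseteq> mcarrier M \<Longrightarrow> A \<subseteq> span M A"
  unfolding span_def by auto

lemma carrier_submod: "submod M (mcarrier M)"
  unfolding submod_def by auto

end

lemma span_least: "submod M N \<Longrightarrow> A \<subseteq> N \<Longrightarrow> span M A \<subseteq> N"
  unfolding span_def by auto

lemma span_carrier: "span M A \<subseteq> mcarrier M"
  unfolding span_def by auto

lemma submod_sub: "submod M N \<Longrightarrow> submod (sub M N) L \<longleftrightarrow> submod M L \<and> L \<subseteq> N"
  unfolding submod_def by auto

lemma submod_trans: "submod M N \<Longrightarrow> submod (sub M N) L \<Longrightarrow> submod M L"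
  using submod_sub by blast

lemma submod_Int: "submod M A \<Longrightarrow> submod M B \<Longrightarrow> submod M (A \<inter> B)"
  unfolding submod_def by auto

lemma lhom_zero: assumes "lmodule M" "lmodule N" "lhom M N f" shows "f (mzero M) = mzero N"
proof -
  have z: "mzero M \<in> mcarrier M" using assms by simp
  have "f (mzero M) = f (msmult M 0 (mzero M))" using assms by simp
  also have "\<dots> = msmult N 0 (f (mzero M))" using assms z unfolding lhom_def by blast
  also have "\<dots> = mzero N" using assms z unfolding lhom_def by simp
  finally show ?thesis .
qed

lemma lhom_in: "lhom M N f \<Longrightarrow> x \<in> mcarrier M \<Longrightarrow> f x \<in> mcarrier N" unfolding lhom_def by blast
lemma lhom_add: "lhom M N f \<Longrightarrow> x \<in> mcarrier M \<Longrightarrow> y \<in> mcarrier M \<Longrightarrow> f (madd M x y) = madd N (f x) (f y)" unfolding lhom_def by blast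
lemma lhom_smult: "lhom M N f \<Longrightarrow> x \<in> mcarrier M \<Longrightarrow> f (msmult M r x) = msmult N r (f x)" unfolding lhom_def by blast

lemma lhom_comp: "lhom M N f \<Longrightarrow> lhom N K g \<Longrightarrow> lhom M K (g \<circ> f)"
  unfolding lhom_def by auto

lemma lhom_preimage: assumes "lmodule M" "lmodule N" "lhom M N f" "submod N Y"
  shows "submod M {x \<in> mcarrier M. f x \<in> Y}"
proof -
  have "f (mzero M) = mzero N" by (rule lhom_zero[OF assms(1-3)])
  then show ?thesis using assms(1,3,4) unfolding submod_def lhom_def by auto
qed

lemma lhom_image: assumes "lmodule M" "lmodule N" "lhom M N f" "submod M X"
  shows "submod N (f ` X)"
proof -
  have X: "X \<subseteq> mcarrier M" using assms(4) unfolding submod_def by auto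
  have z: "mzero M \<in> X" using assms(4) unfolding submod_def by auto
  have a: "\<And>x y. x \<in> X \<Longrightarrow> y \<in> X \<Longrightarrow> madd M x y \<in> X" using assms(4) unfolding submod_def by auto
  have s: "\<And>x r. x \<in> X \<Longrightarrow> msmult M r x \<in> X" using assms(4) unfolding submod_def by auto
  have fz: "f (mzero M) = mzero N" by (rule lhom_zero[OF assms(1-3)])
  have 1: "f ` X \<subseteq> mcarrier N" using X lhom_in[OF assms(3)] by blast
  have 2: "mzero N \<in> f ` X" using z fz by (metis image_eqI)
  have 3: "\<forall>a\<in>f ` X. \<forall>b\<in>f ` X. madd N a b \<in> f ` X"
  proof (intro ballI)
    fix a b assume "a \<in> f ` X" "b \<in> f ` X"
    then obtain x y where xy: "x \<in> X" "y \<in> X" "a = f x" "b = f y" by auto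
    have "x \<in> mcarrier M" "y \<in> mcarrier M" using X xy by auto
    then have "madd N a b = f (madd M x y)" using xy(3,4) lhom_add[OF assms(3)] by simp
    then show "madd N a b \<in> f ` X" using a[OF xy(1,2)] by simp
  qed
  have 4: "\<forall>r. \<forall>a\<in>f ` X. msmult N r a \<in> f ` X"
  proof (intro allI ballI)
    fix r a assume "a \<in> f ` X"
    then obtain x where xy: "x \<in> X" "a = f x" by auto
    have "x \<in> mcarrier M" using X xy by auto
    then have "msmult N r a = f (msmult M r x)" using xy(2) lhom_smult[OF assms(3)] by simp
    then show "msmult N r a \<in> f ` X" using s[OF xy(1)] by simp
  qed
  show ?thesis unfolding submod_def using 1 2 3 4 by blast
qed

lemma lhom_span: assumes "lmodule M" "lmodule N" "lhom M N f" "A \<subseteq> mcarrier M"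
  shows "f ` span M A \<subseteq> span N (f ` A)"
proof -
  have A: "f ` A \<subseteq> mcarrier N" using assms(4) lhom_in[OF assms(3)] by blast
  have "submod M {x \<in> mcarrier M. f x \<in> span N (f ` A)}"
    by (rule lhom_preimage[OF assms(1-3) span_submod[OF assms(2)]])
  moreover have "A \<subseteq> {x \<in> mcarrier M. f x \<in> span N (f ` A)}"
    using assms(4) span_sup[OF assms(2) A] by auto
  ultimately have "span M A \<subseteq> {x \<in> mcarrier M. f x \<in> span N (f ` A)}" by (rule span_least)
  then show ?thesis by auto
qed

lemma msmult_zero_zero: "lmodule N \<Longrightarrow> msmult N r (mzero N) = mzero N"
proof -
  assume L: "lmodule N"
  have "msmult N r (mzero N) = msmult N r (msmult N 0 (mzero N))" using L by (subst lm_smult_zero) auto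
  also have "\<dots> = msmult N (r * 0) (mzero N)" using lm_smass[OF L lm_zero[OF L], of r 0] by simp
  also have "\<dots> = mzero N" using lm_smult_zero[OF L lm_zero[OF L]] by simp
  finally show ?thesis .
qed

lemma ker_submod: "lmodule M \<Longrightarrow> lmodule N \<Longrightarrow> lhom M N f \<Longrightarrow> submod M (ker M N f)"
proof -
  assume a: "lmodule M" "lmodule N" "lhom M N f"
  have "submod N {mzero N}" unfolding submod_def using a(2) msmult_zero_zero[OF a(2)] by simp
  from lhom_preimage[OF a this] show ?thesis unfolding ker_def by simp
qed

lemma lhom_sub_dom: "lhom M N f \<Longrightarrow> X \<subseteq> mcarrier M \<Longrightarrow> lhom (sub M X) N f"
  unfolding lhom_def sub_simps using subsetD by metis

lemma lhom_sub_cod: "lhom M N f \<Longrightarrow> f ` mcarrier M \<subseteq> Y \<Longrightarrow> lhom M (sub N Y) f"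
  unfolding lhom_def by auto

lemma lhom_sub_cod2: "lhom M (sub N Y) f \<Longrightarrow> Y \<subseteq> mcarrier N \<Longrightarrow> lhom M N f"
  unfolding lhom_def by auto

lemma fin_gen_image: assumes "lmodule M" "lmodule N" "lhom M N f" "f ` mcarrier M = mcarrier N" "fin_gen M"
  shows "fin_gen N"
proof -
  obtain A where A: "finite A" "A \<subseteq> mcarrier M" "span M A = mcarrier M" using assms(5) unfolding fin_gen_def by auto
  have "mcarrier N \<subseteq> span N (f ` A)" using lhom_span[OF assms(1-3) A(2)] A(3) assms(4) by simp
  then have "span N (f ` A) = mcarrier N" using span_carrier[of N "f ` A"] by (rule equalityI[rotated])
  moreover have "f ` A \<subseteq> mcarrier N" using A(2) assms(4) by auto
  ultimately show ?thesis unfolding fin_gen_def using A(1) by blast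
qed

lemma lm_add4: assumes "lmodule M" "a \<in> mcarrier M" "b \<in> mcarrier M" "c \<in> mcarrier M" "d \<in> mcarrier M"
  shows "madd M (madd M a b) (madd M c d) = madd M (madd M a c) (madd M b d)"
proof -
  have "madd M (madd M a b) (madd M c d) = madd M a (madd M b (madd M c d))" using assms by (simp add: lm_assoc)
  also have "madd M b (madd M c d) = madd M (madd M b c) d" using assms by (simp add: lm_assoc)
  also have "madd M b c = madd M c b" using assms by (simp add: lm_comm)
  also have "madd M (madd M c b) d = madd M c (madd M b d)" using assms by (simp add: lm_assoc)
  also have "madd M a (madd M c (madd M b d)) = madd M (madd M a c) (madd M b d)" using assms by (simp add: lm_assoc)
  finally show ?thesis .
qed

lemma lm_add_diff: assumes "lmodule M" "x \<in> mcarrier M" "y \<in> mcarrier M"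
  shows "madd M (madd M x y) (msmult M (-1) y) = x"
proof -
  have "madd M (madd M x y) (msmult M (-1) y) = madd M x (madd M y (msmult M (-1) y))"
    using assms by (simp add: lm_assoc)
  also have "\<dots> = x" using assms by (simp add: lm_neg)
  finally show ?thesis .
qed

lemma submod_sub_carrier: "submod M N \<Longrightarrow> N \<subseteq> mcarrier M" unfolding submod_def by auto

lemma pre_maxsub: assumes LA: "lmodule A" and LB: "lmodule B" and g: "lhom A B g" and mx: "maxsub B L'"
  shows "{x \<in> mcarrier A. g x \<in> L'} = mcarrier A \<or> maxsub A {x \<in> mcarrier A. g x \<in> L'}"
proof (cases "{x \<in> mcarrier A. g x \<in> L'} = mcarrier A")
  case True then show ?thesis by simp
next
  case False
  define L where "L = {x \<in> mcarrier A. g x \<in> L'}"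
  have sL': "submod B L'" using mx unfolding maxsub_def by auto
  have L'c: "L' \<subseteq> mcarrier B" using sL' submod_sub_carrier by auto
  have sL: "submod A L" unfolding L_def by (rule lhom_preimage[OF LA LB g sL'])
  have "\<forall>L2. submod A L2 \<and> L \<subseteq> L2 \<longrightarrow> L2 = L \<or> L2 = mcarrier A"
  proof (intro allI impI)
    fix L2 assume a: "submod A L2 \<and> L \<subseteq> L2"
    show "L2 = L \<or> L2 = mcarrier A"
    proof (cases "L2 = L")
      case True then show ?thesis by simp
    next
      case False
      then obtain z where z: "z \<in> L2" "z \<notin> L" using a by blast
      have L2c: "L2 \<subseteq> mcarrier A" using a submod_sub_carrier by blast
      have zc: "z \<in> mcarrier A" using z L2c by blast
      have gzc: "g z \<in> mcarrier B" using lhom_in[OF g zc] .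
      have gz: "g z \<notin> L'" using z zc unfolding L_def by blast
      define L'' where "L'' = {madd B l (msmult B b (g z)) | l b. l \<in> L'}"
      have L''c: "L'' \<subseteq> mcarrier B" unfolding L''_def using L'c gzc LB by auto
      have "submod B L''" unfolding submod_def
      proof (intro conjI ballI allI)
        show "L'' \<subseteq> mcarrier B" by (rule L''c)
        have "madd B (mzero B) (msmult B 0 (g z)) = mzero B" using LB gzc by simp
        moreover have "mzero B \<in> L'" using sL' unfolding submod_def by auto
        ultimately show "mzero B \<in> L''" unfolding L''_def by (metis (mono_tags, lifting) mem_Collect_eq)
      next
        fix x y assume "x \<in> L''" "y \<in> L''"
        then obtain l1 b1 l2 b2 where xy: "x = madd B l1 (msmult B b1 (g z))" "l1 \<in> L'"
           "y = madd B l2 (msmult B b2 (g z))" "l2 \<in> L'" unfolding L''_def by blast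
        have c: "l1 \<in> mcarrier B" "l2 \<in> mcarrier B" using xy L'c by auto
        have "madd B x y = madd B (madd B l1 l2) (madd B (msmult B b1 (g z)) (msmult B b2 (g z)))"
          unfolding xy(1,3) using lm_add4[OF LB c(1) _ c(2)] LB gzc by simp
        also have "madd B (msmult B b1 (g z)) (msmult B b2 (g z)) = msmult B (b1 + b2) (g z)"
          using lm_sdistr[OF LB gzc] by simp
        finally have "madd B x y = madd B (madd B l1 l2) (msmult B (b1 + b2) (g z))" .
        moreover have "madd B l1 l2 \<in> L'" using xy sL' unfolding submod_def by blast
        ultimately show "madd B x y \<in> L''" unfolding L''_def by blast
      next
        fix r x assume "x \<in> L''"
        then obtain l1 b1 where xy: "x = madd B l1 (msmult B b1 (g z))" "l1 \<in> L'" unfolding L''_def by blast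
        have c: "l1 \<in> mcarrier B" using xy L'c by auto
        have "msmult B r x = madd B (msmult B r l1) (msmult B (r * b1) (g z))"
          unfolding xy(1) using lm_sdistl[OF LB c] lm_smass[OF LB gzc] LB gzc by simp
        moreover have "msmult B r l1 \<in> L'" using xy sL' unfolding submod_def by blast
        ultimately show "msmult B r x \<in> L''" unfolding L''_def by blast
      qed
      moreover have "L' \<subseteq> L''"
      proof
        fix l assume "l \<in> L'"
        then have "l = madd B l (msmult B 0 (g z))" using LB gzc L'c by auto
        then show "l \<in> L''" unfolding L''_def using \<open>l \<in> L'\<close> by blast
      qed
      moreover have "g z \<in> L''"
      proof -
        have "g z = madd B (mzero B) (msmult B 1 (g z))" using LB gzc by simp
        moreover have "mzero B \<in> L'" using sL' unfolding submod_def by auto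
        ultimately show ?thesis unfolding L''_def by blast
      qed
      ultimately have L''B: "L'' = mcarrier B" using mx gz unfolding maxsub_def by blast
      have "mcarrier A \<subseteq> L2"
      proof
        fix n assume nc: "n \<in> mcarrier A"
        have "g n \<in> L''" using lhom_in[OF g nc] L''B by simp
        then obtain l b where lb: "g n = madd B l (msmult B b (g z))" "l \<in> L'" unfolding L''_def by blast
        have lc: "l \<in> mcarrier B" using lb L'c by auto
        define w where "w = madd A n (msmult A (-1) (msmult A b z))"
        have bzc: "msmult A b z \<in> mcarrier A" using LA zc by simp
        have wc: "w \<in> mcarrier A" unfolding w_def using LA nc bzc by simp
        have "g w = madd B (g n) (msmult B (-1) (msmult B b (g z)))"
          unfolding w_def using lhom_add[OF g nc] lhom_smult[OF g] LA nc bzc zc by simp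
        also have "\<dots> = l" unfolding lb(1) using lm_add_diff[OF LB lc] LB gzc by simp
        finally have "w \<in> L" unfolding L_def using wc lb(2) by simp
        then have "w \<in> L2" using a by blast
        moreover have "msmult A b z \<in> L2" using z(1) a unfolding submod_def by blast
        ultimately have "madd A w (msmult A b z) \<in> L2" using a unfolding submod_def by blast
        moreover have "madd A w (msmult A b z) = n" unfolding w_def by (rule lm_diff_add[OF LA nc bzc])
        ultimately show "n \<in> L2" by simp
      qed
      then show ?thesis using L2c by blast
    qed
  qed
  then have "maxsub A L" unfolding maxsub_def using sL False L_def by blast
  then show ?thesis unfolding L_def by blast
qed

lemma rad_sub: "rad A \<subseteq> mcarrier A" unfolding rad_def by auto

lemma rad_submod: assumes "lmodule A" shows "submod A (rad A)"
  unfolding rad_def submod_def maxsub_def using assms by auto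

lemma rad_le_maxsub: "maxsub A L \<Longrightarrow> rad A \<subseteq> L" unfolding rad_def by auto

lemma rad_hom: assumes LA: "lmodule A" and LB: "lmodule B" and g: "lhom A B g"
  shows "g ` rad A \<subseteq> rad B"
proof
  fix y assume "y \<in> g ` rad A"
  then obtain x where x: "x \<in> rad A" "y = g x" by blast
  have xc: "x \<in> mcarrier A" using x rad_sub[of A] by blast
  have "\<forall>L'. maxsub B L' \<longrightarrow> g x \<in> L'"
  proof (intro allI impI)
    fix L' assume m: "maxsub B L'"
    from pre_maxsub[OF LA LB g m] show "g x \<in> L'"
    proof
      assume "{x \<in> mcarrier A. g x \<in> L'} = mcarrier A" then show ?thesis using xc by blast
    next
      assume "maxsub A {x \<in> mcarrier A. g x \<in> L'}"
      then have "rad A \<subseteq> {x \<in> mcarrier A. g x \<in> L'}" by (rule rad_le_maxsub)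
      then show ?thesis using x by blast
    qed
  qed
  then show "y \<in> rad B" unfolding rad_def using x lhom_in[OF g xc] by blast
qed

abbreviation GS :: "('r::ring_1) umod set \<Rightarrow> ('r, 'm) lmod \<Rightarrow> 'm set" where
  "GS S N \<equiv> \<Union> {f ` mcarrier T | (T :: 'r umod) f. lmodule T \<and> fin_gen T \<and> in_T S T \<and> lhom T N f}"

lemma GS_carrier: fixes S :: "('r::ring_1) umod set" shows "GS S N \<subseteq> mcarrier N"
proof
  fix y assume "y \<in> GS S N"
  then obtain T f x where T: "lhom (T :: 'r umod) N f" "x \<in> mcarrier T" "y = f x" by blast
  then show "y \<in> mcarrier N" using lhom_in[OF T(1) T(2)] by simp
qed

lemma tS_submod: fixes S :: "('r::ring_1) umod set" shows "lmodule N \<Longrightarrow> submod N (tS S N)"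
  unfolding tS_def by (rule span_submod)

lemma tS_carrier: "tS S N \<subseteq> mcarrier N"
  unfolding tS_def by (rule span_carrier)

lemma GS_tS: fixes S :: "('r::ring_1) umod set" shows "lmodule N \<Longrightarrow> GS S N \<subseteq> tS S N"
  unfolding tS_def by (rule span_sup[OF _ GS_carrier])

lemma GS_hom: fixes S :: "('r::ring_1) umod set" assumes "lhom N N' h" shows "h ` GS S N \<subseteq> GS S N'"
proof
  fix y assume "y \<in> h ` GS S N"
  then obtain T f x where T: "lmodule (T :: 'r umod)" "fin_gen T" "in_T S T" "lhom T N f" "x \<in> mcarrier T" "y = h (f x)"
    by blast
  have c: "lhom T N' (h \<circ> f)" using lhom_comp[OF T(4) assms] .
  have "y \<in> (h \<circ> f) ` mcarrier T" using T(5,6) by simp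
  moreover have "(h \<circ> f) ` mcarrier T \<in> {f ` mcarrier T | (T :: 'r umod) f. lmodule T \<and> fin_gen T \<and> in_T S T \<and> lhom T N' f}"
    using T(1-3) c by blast
  ultimately show "y \<in> GS S N'" by (rule UnionI[rotated])
qed

lemma tS_hom: assumes LN: "lmodule N" and LN': "lmodule N'" and h: "lhom N N' h"
  shows "h ` tS S N \<subseteq> tS S N'"
proof -
  have "h ` tS S N \<subseteq> span N' (h ` GS S N)" unfolding tS_def by (rule lhom_span[OF LN LN' h GS_carrier])
  also have "\<dots> \<subseteq> tS S N'"
    by (rule span_least[OF tS_submod[OF LN'] order_trans[OF GS_hom[OF h] GS_tS[OF LN']]])
  finally show ?thesis .
qed

lemma phi_props: assumes LN: "lmodule N" and X: "submod N X"
  shows "submod N (rad_tS S N X)" "rad_tS S N X \<subseteq> tS S (sub N X)" "tS S (sub N X) \<subseteq> X"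
proof -
  have L1: "lmodule (sub N X)" by (rule submod_module[OF LN X])
  have t1: "submod (sub N X) (tS S (sub N X))" by (rule tS_submod[OF L1])
  then have t2: "submod N (tS S (sub N X))" using submod_trans[OF X] by blast
  show "tS S (sub N X) \<subseteq> X" using tS_carrier[of S "sub N X"] by simp
  have L2: "lmodule (sub N (tS S (sub N X)))" by (rule submod_module[OF LN t2])
  have "submod (sub N (tS S (sub N X))) (rad (sub N (tS S (sub N X))))" by (rule rad_submod[OF L2])
  then show "submod N (rad_tS S N X)" unfolding rad_tS_def using submod_trans[OF t2] by blast
  show "rad_tS S N X \<subseteq> tS S (sub N X)" unfolding rad_tS_def using rad_sub[of "sub N (tS S (sub N X))"] by simp
qed

lemma phi_hom: assumes LN: "lmodule N" and LN': "lmodule N'" and h: "lhom N N' h"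
  and X: "submod N X" and X': "submod N' X'" and hX: "h ` X \<subseteq> X'"
  shows "h ` rad_tS S N X \<subseteq> rad_tS S N' X'"
proof -
  have Xc: "X \<subseteq> mcarrier N" using X submod_sub_carrier by auto
  have h1: "lhom (sub N X) (sub N' X') h"
    by (rule lhom_sub_cod[OF lhom_sub_dom[OF h Xc]]) (simp add: hX)
  have L1: "lmodule (sub N X)" by (rule submod_module[OF LN X])
  have L1': "lmodule (sub N' X')" by (rule submod_module[OF LN' X'])
  have ht: "h ` tS S (sub N X) \<subseteq> tS S (sub N' X')" by (rule tS_hom[OF L1 L1' h1])
  have t2: "submod N (tS S (sub N X))" using submod_trans[OF X tS_submod[OF L1]] .
  have t2': "submod N' (tS S (sub N' X'))" using submod_trans[OF X' tS_submod[OF L1']] .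
  have tc: "tS S (sub N X) \<subseteq> mcarrier N" using t2 submod_sub_carrier by auto
  have h2: "lhom (sub N (tS S (sub N X))) (sub N' (tS S (sub N' X'))) h"
    by (rule lhom_sub_cod[OF lhom_sub_dom[OF h tc]]) (simp add: ht)
  show ?thesis unfolding rad_tS_def
    by (rule rad_hom[OF submod_module[OF LN t2] submod_module[OF LN' t2'] h2])
qed

lemma phi_iter: assumes LN: "lmodule N" and LN': "lmodule N'" and h: "lhom N N' h"
  shows "submod N ((rad_tS S N ^^ i) (mcarrier N)) \<and> submod N' ((rad_tS S N' ^^ i) (mcarrier N')) \<and>
    h ` (rad_tS S N ^^ i) (mcarrier N) \<subseteq> (rad_tS S N' ^^ i) (mcarrier N')"
proof (induction i)
  case 0
  then show ?case using carrier_submod[OF LN] carrier_submod[OF LN'] lhom_in[OF h] by auto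
next
  case (Suc i)
  then show ?case using phi_props(1)[OF LN] phi_props(1)[OF LN'] phi_hom[OF LN LN' h] by simp
qed

lemma phi_iter_submod: assumes LN: "lmodule N"
  shows "submod N ((rad_tS S N ^^ i) (mcarrier N))"
  by (induction i) (simp_all add: carrier_submod[OF LN] phi_props(1)[OF LN])

lemma dom_lemma: assumes LN: "lmodule N" and LN': "lmodule N'"
  and sep: "\<forall>x\<in>mcarrier N. x \<noteq> mzero N \<longrightarrow> (\<exists>h. lhom N N' h \<and> h x \<noteq> mzero N')"
  and Q': "tS S (sub N' ((rad_tS S N' ^^ i) (mcarrier N'))) = {mzero N'}"
  shows "tS S (sub N ((rad_tS S N ^^ i) (mcarrier N))) = {mzero N}"
proof -
  define X where "X = (rad_tS S N ^^ i) (mcarrier N)"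
  define X' where "X' = (rad_tS S N' ^^ i) (mcarrier N')"
  have sX: "submod N X" unfolding X_def by (rule phi_iter_submod[OF LN])
  have sX': "submod N' X'" unfolding X'_def by (rule phi_iter_submod[OF LN'])
  have L1: "lmodule (sub N X)" by (rule submod_module[OF LN sX])
  have L1': "lmodule (sub N' X')" by (rule submod_module[OF LN' sX'])
  have Xc: "X \<subseteq> mcarrier N" using sX submod_sub_carrier by auto
  have "tS S (sub N X) \<subseteq> {mzero N}"
  proof
    fix z assume z: "z \<in> tS S (sub N X)"
    show "z \<in> {mzero N}"
    proof (rule ccontr)
      assume "z \<notin> {mzero N}"
      moreover have zc: "z \<in> mcarrier N" using z tS_carrier[of S "sub N X"] Xc by auto
      ultimately obtain h where h: "lhom N N' h" "h z \<noteq> mzero N'" using sep by auto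
      have hX: "h ` X \<subseteq> X'" unfolding X_def X'_def using phi_iter[OF LN LN' h(1)] by blast
      have h1: "lhom (sub N X) (sub N' X') h"
        by (rule lhom_sub_cod[OF lhom_sub_dom[OF h(1) Xc]]) (simp add: hX)
      have "h z \<in> tS S (sub N' X')" using tS_hom[OF L1 L1' h1] z by blast
      then show False using Q' h(2) unfolding X'_def by simp
    qed
  qed
  moreover have "mzero N \<in> tS S (sub N X)" using tS_submod[OF L1] unfolding submod_def by simp
  ultimately show ?thesis unfolding X_def by blast
qed

definition lid :: "'r::ring_1 set \<Rightarrow> bool" where
  "lid N \<longleftrightarrow> 0 \<in> N \<and> (\<forall>x\<in>N. \<forall>y\<in>N. x + y \<in> N) \<and> (\<forall>r. \<forall>x\<in>N. r * x \<in> N)"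

lemma regmod_simps[simp]: "mcarrier regmod = UNIV" "madd regmod = (+)" "mzero regmod = 0" "msmult regmod = (*)"
  by (simp_all add: regmod_def)

lemma lmodule_reg: "lmodule (regmod :: ('r::ring_1, 'r) lmod)"
  unfolding lmodule_def by (simp add: algebra_simps)

lemma submod_reg: "submod (regmod :: ('r::ring_1, 'r) lmod) N \<longleftrightarrow> lid N"
  unfolding submod_def lid_def by simp

lemma submod_subreg: "submod (sub (regmod :: ('r::ring_1, 'r) lmod) N) L \<longleftrightarrow> lid L \<and> L \<subseteq> N"
  unfolding submod_def lid_def by auto

lemma lid_0: "lid N \<Longrightarrow> 0 \<in> N" unfolding lid_def by auto
lemma lid_add: "lid N \<Longrightarrow> x \<in> N \<Longrightarrow> y \<in> N \<Longrightarrow> x + y \<in> N" unfolding lid_def by auto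
lemma lid_mult: "lid N \<Longrightarrow> x \<in> N \<Longrightarrow> r * x \<in> N" unfolding lid_def by auto
lemma lid_neg: "lid N \<Longrightarrow> x \<in> N \<Longrightarrow> - x \<in> N" using lid_mult[of N x "-1"] by simp
lemma lid_diff: "lid N \<Longrightarrow> x \<in> N \<Longrightarrow> y \<in> N \<Longrightarrow> x - y \<in> N"
  using lid_add[of N x "- y"] lid_neg[of N y] by simp
lemma lid_UNIV: "lid N \<Longrightarrow> 1 \<in> N \<Longrightarrow> N = UNIV" using lid_mult[of N 1] by force
lemma lid_univ: "lid (UNIV :: 'r::ring_1 set)" unfolding lid_def by simp
lemma lid_Int: "lid A \<Longrightarrow> lid B \<Longrightarrow> lid (A \<inter> B)" unfolding lid_def by auto

definition maxlid :: "'r::ring_1 set \<Rightarrow> bool" where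
  "maxlid m \<longleftrightarrow> lid m \<and> m \<noteq> UNIV \<and> (\<forall>L. lid L \<and> m \<subseteq> L \<longrightarrow> L = m \<or> L = UNIV)"

lemma maxsub_reg: "maxsub (regmod :: ('r::ring_1, 'r) lmod) m \<longleftrightarrow> maxlid m"
  unfolding maxsub_def maxlid_def submod_reg by simp

definition Jr :: "'r::ring_1 set" where "Jr = {r. \<forall>m. maxlid m \<longrightarrow> r \<in> m}"

lemma rad_reg: "rad (regmod :: ('r::ring_1, 'r) lmod) = Jr"
  unfolding rad_def Jr_def maxsub_reg by auto

lemma lid_zorn: assumes "lid B" "B \<subseteq> N" "x \<notin> B"
  shows "\<exists>L. lid L \<and> B \<subseteq> L \<and> L \<subseteq> N \<and> x \<notin> L \<and> (\<forall>L'. lid L' \<and> L \<subseteq> L' \<and> L' \<subseteq> N \<and> x \<notin> L' \<longrightarrow> L' = L)"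
proof -
  define A where "A = {L. lid L \<and> B \<subseteq> L \<and> L \<subseteq> N \<and> x \<notin> L}"
  have BA: "B \<in> A" using assms unfolding A_def by simp
  then have ne: "A \<noteq> {}" by blast
  have "\<exists>M\<in>A. \<forall>X\<in>A. M \<subseteq> X \<longrightarrow> X = M"
  proof (rule subset_Zorn_nonempty[OF ne])
    fix C assume C: "C \<noteq> {}" "subset.chain A C"
    have CA: "C \<subseteq> A" and ch: "\<forall>X\<in>C. \<forall>Y\<in>C. X \<subseteq> Y \<or> Y \<subseteq> X" using C(2) unfolding subset_chain_def by auto
    have Cl: "\<And>X. X \<in> C \<Longrightarrow> lid X" using CA unfolding A_def by blast
    have CB: "\<And>X. X \<in> C \<Longrightarrow> B \<subseteq> X" using CA unfolding A_def by blast
    have CN: "\<And>X. X \<in> C \<Longrightarrow> X \<subseteq> N" using CA unfolding A_def by blast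
    have Cx: "\<And>X. X \<in> C \<Longrightarrow> x \<notin> X" using CA unfolding A_def by blast
    obtain L0 where L0: "L0 \<in> C" using C(1) by blast
    have "lid (\<Union>C)" unfolding lid_def
    proof (intro conjI ballI allI)
      have "0 \<in> L0" using lid_0[OF Cl[OF L0]] .
      then show "0 \<in> \<Union>C" using L0 by blast
    next
      fix a b assume "a \<in> \<Union>C" "b \<in> \<Union>C"
      then obtain X Y where XY: "X \<in> C" "Y \<in> C" "a \<in> X" "b \<in> Y" by blast
      from ch XY(1,2) have "X \<subseteq> Y \<or> Y \<subseteq> X" by blast
      then show "a + b \<in> \<Union>C"
      proof
        assume "X \<subseteq> Y" then have "a + b \<in> Y" using lid_add[OF Cl[OF XY(2)]] XY(3,4) by blast
        then show ?thesis using XY(2) by blast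
      next
        assume "Y \<subseteq> X" then have "a + b \<in> X" using lid_add[OF Cl[OF XY(1)]] XY(3,4) by blast
        then show ?thesis using XY(1) by blast
      qed
    next
      fix r a assume "a \<in> \<Union>C"
      then obtain X where XY: "X \<in> C" "a \<in> X" by blast
      have "r * a \<in> X" using lid_mult[OF Cl[OF XY(1)] XY(2)] .
      then show "r * a \<in> \<Union>C" using XY by blast
    qed
    moreover have "B \<subseteq> \<Union>C" using CB[OF L0] L0 by blast
    moreover have "\<Union>C \<subseteq> N" using CN by blast
    moreover have "x \<notin> \<Union>C" using Cx by blast
    ultimately show "\<Union>C \<in> A" unfolding A_def by simp
  qed
  then obtain M where "M \<in> A" "\<forall>X\<in>A. M \<subseteq> X \<longrightarrow> X = M" by blast
  then show ?thesis unfolding A_def by (intro exI[of _ M]) (simp, meson order_trans)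
qed

lemma exists_maxlid: assumes "lid I" "1 \<notin> I" shows "\<exists>m. maxlid m \<and> I \<subseteq> m"
proof -
  from lid_zorn[OF assms(1) subset_UNIV assms(2)]
  obtain L where L: "lid L" "I \<subseteq> L" "1 \<notin> L" "\<forall>L'. lid L' \<and> L \<subseteq> L' \<and> L' \<subseteq> UNIV \<and> 1 \<notin> L' \<longrightarrow> L' = L"
    by blast
  have "maxlid L" unfolding maxlid_def
  proof (intro conjI allI impI)
    show "lid L" by fact
    show "L \<noteq> UNIV" using L(3) by blast
    fix L' assume a: "lid L' \<and> L \<subseteq> L'"
    show "L' = L \<or> L' = UNIV"
    proof (cases "1 \<in> L'")
      case True then show ?thesis using lid_UNIV a by blast
    next
      case False then show ?thesis using L(4) a by blast
    qed
  qed
  then show ?thesis using L(2) by blast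
qed

lemma maxlid_lid: "maxlid m \<Longrightarrow> lid m" unfolding maxlid_def by auto
lemma maxlid_1: "maxlid m \<Longrightarrow> 1 \<notin> m" unfolding maxlid_def using lid_UNIV by blast

lemma lid_plus_cyc: assumes "lid m" shows "lid {a + c * y | a c. a \<in> m}"
  unfolding lid_def
proof (intro conjI ballI allI)
  have "(0::'a) = 0 + 0 * y" by simp
  then show "0 \<in> {a + c * y | a c. a \<in> m}" using lid_0[OF assms] by blast
next
  fix u v assume "u \<in> {a + c * y | a c. a \<in> m}" "v \<in> {a + c * y | a c. a \<in> m}"
  then obtain a1 c1 a2 c2 where "u = a1 + c1 * y" "a1 \<in> m" "v = a2 + c2 * y" "a2 \<in> m" by blast
  then have "u + v = (a1 + a2) + (c1 + c2) * y" "a1 + a2 \<in> m" using lid_add[OF assms] by (auto simp: algebra_simps)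
  then show "u + v \<in> {a + c * y | a c. a \<in> m}" by blast
next
  fix r u assume "u \<in> {a + c * y | a c. a \<in> m}"
  then obtain a1 c1 where "u = a1 + c1 * y" "a1 \<in> m" by blast
  then have "r * u = r * a1 + (r * c1) * y" "r * a1 \<in> m" using lid_mult[OF assms] by (auto simp: algebra_simps)
  then show "r * u \<in> {a + c * y | a c. a \<in> m}" by blast
qed

lemma maxlid_gen: assumes "maxlid m" "y \<notin> m" shows "\<exists>a c. a \<in> m \<and> 1 = a + c * y"
proof -
  have l: "lid {a + c * y | a c. a \<in> m}" by (rule lid_plus_cyc[OF maxlid_lid[OF assms(1)]])
  have s: "m \<subseteq> {a + c * y | a c. a \<in> m}"
  proof
    fix z assume z: "z \<in> m"
    have "z = z + 0 * y" by simp
    then show "z \<in> {a + c * y | a c. a \<in> m}" using z by blast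
  qed
  have "y = 0 + 1 * y" by simp
  then have "y \<in> {a + c * y | a c. a \<in> m}" using lid_0[OF maxlid_lid[OF assms(1)]] by blast
  then have "{a + c * y | a c. a \<in> m} = UNIV" using assms l s unfolding maxlid_def by blast
  then show ?thesis by blast
qed

lemma Jr_lid: "lid (Jr :: 'r::ring_1 set)" unfolding lid_def
proof (intro conjI ballI allI)
  show "0 \<in> Jr" unfolding Jr_def using maxlid_lid lid_0 by blast
  fix x y :: 'r assume "x \<in> Jr" "y \<in> Jr" then show "x + y \<in> Jr" unfolding Jr_def using maxlid_lid lid_add by blast
next
  fix r x :: 'r assume "x \<in> Jr" then show "r * x \<in> Jr" unfolding Jr_def using maxlid_lid lid_mult by blast
qed

lemma Jr_right: assumes "j \<in> Jr" shows "j * r \<in> Jr"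
  unfolding Jr_def
proof (intro CollectI allI impI)
  fix m :: "'a set" assume m: "maxlid m"
  have lm: "lid m" using maxlid_lid[OF m] .
  show "j * r \<in> m"
  proof (cases "r \<in> m")
    case True then show ?thesis using lid_mult[OF lm] by blast
  next
    case False
    define m' where "m' = {s. s * r \<in> m}"
    have lm': "lid m'" unfolding m'_def lid_def using lid_0[OF lm] lid_add[OF lm] lid_mult[OF lm]
      by (simp add: distrib_right mult.assoc)
    have "maxlid m'" unfolding maxlid_def
    proof (intro conjI allI impI)
      show "lid m'" by fact
      show "m' \<noteq> UNIV"
      proof
        assume "m' = UNIV" then have "1 * r \<in> m" unfolding m'_def by blast
        then show False using False by simp
      qed
      fix L assume a: "lid L \<and> m' \<subseteq> L"
      show "L = m' \<or> L = UNIV"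
      proof (cases "L = m'")
        case True then show ?thesis by simp
      next
        case False
        then obtain s where s: "s \<in> L" "s \<notin> m'" using a by blast
        have "s * r \<notin> m" using s unfolding m'_def by simp
        then obtain a c where ac: "a \<in> m" "1 = a + c * (s * r)" using maxlid_gen[OF m] by blast
        have "\<forall>u. u \<in> L"
        proof
          fix u
          have e1: "u * r = (u * r) * a + (u * r * c) * (s * r)"
          proof -
            have "u * r = (u * r) * (a + c * (s * r))" using ac(2) by simp
            also have "\<dots> = (u * r) * a + (u * r * c) * (s * r)" by (simp add: distrib_left mult.assoc)
            finally show ?thesis .
          qed
          have e2: "(u - (u * r * c) * s) * r = u * r - (u * r * c) * (s * r)" by (simp add: left_diff_distrib mult.assoc)
          have "(u - (u * r * c) * s) * r = (u * r) * a" unfolding e2 by (rule iffD2[OF diff_eq_eq]) (rule e1)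
          moreover have "(u * r) * a \<in> m" using lid_mult[OF lm ac(1)] .
          ultimately have "u - (u * r * c) * s \<in> m'" unfolding m'_def by simp
          then have "u - (u * r * c) * s \<in> L" using a by blast
          moreover have "(u * r * c) * s \<in> L" using lid_mult a s(1) by blast
          ultimately have "(u - (u * r * c) * s) + (u * r * c) * s \<in> L" using lid_add a by blast
          then show "u \<in> L" by simp
        qed
        then show ?thesis by blast
      qed
    qed
    then have "j \<in> m'" using assms unfolding Jr_def by blast
    then show ?thesis unfolding m'_def by simp
  qed
qed

lemma Jr_unit: assumes "j \<in> Jr" shows "\<exists>u. u * (1 - j) = 1"
proof (rule ccontr)
  assume na: "\<not> (\<exists>u. u * (1 - j) = 1)"
  define I where "I = {r * (1 - j) | r. True}"
  have lI: "lid I" unfolding lid_def I_def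
  proof (intro conjI ballI allI)
    have "(0::'a) = 0 * (1 - j)" by simp
    then show "0 \<in> {r * (1 - j) | r. True}" by blast
  next
    fix a b assume "a \<in> {r * (1 - j) | r. True}" "b \<in> {r * (1 - j) | r. True}"
    then obtain r1 r2 where "a = r1 * (1 - j)" "b = r2 * (1 - j)" by blast
    then have "a + b = (r1 + r2) * (1 - j)" by (simp add: distrib_right)
    then show "a + b \<in> {r * (1 - j) | r. True}" by blast
  next
    fix s a assume "a \<in> {r * (1 - j) | r. True}"
    then obtain r1 where "a = r1 * (1 - j)" by blast
    then have "s * a = (s * r1) * (1 - j)" by (simp add: mult.assoc)
    then show "s * a \<in> {r * (1 - j) | r. True}" by blast
  qed
  have "1 \<notin> I" using na unfolding I_def by auto
  then obtain m where m: "maxlid m" "I \<subseteq> m" using exists_maxlid[OF lI] by blast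
  have "1 - j = 1 * (1 - j)" by simp
  then have "1 - j \<in> I" unfolding I_def by blast
  then have "1 - j \<in> m" using m by blast
  moreover have "j \<in> m" using assms m unfolding Jr_def by blast
  ultimately have "(1 - j) + j \<in> m" using lid_add[OF maxlid_lid[OF m(1)]] by blast
  then show False using maxlid_1[OF m(1)] by simp
qed

lemma artin_min: assumes art: "artinian (regmod :: ('r::ring_1, 'r) lmod)" and ne: "F \<noteq> {}"
  and l: "\<forall>X\<in>F. lid (X :: 'r set)"
  shows "\<exists>X\<in>F. \<forall>Y\<in>F. Y \<subseteq> X \<longrightarrow> Y = X"
proof (rule ccontr)
  assume "\<not> ?thesis"
  then have h: "\<forall>X\<in>F. \<exists>Y. Y \<in> F \<and> Y \<subset> X" by blast
  define c where "c X = (SOME Y. Y \<in> F \<and> Y \<subset> X)" for X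
  have c: "c X \<in> F \<and> c X \<subset> X" if "X \<in> F" for X
  proof -
    have "\<exists>Y. Y \<in> F \<and> Y \<subset> X" using h that by blast
    then show ?thesis unfolding c_def by (rule someI_ex)
  qed
  obtain X0 where X0: "X0 \<in> F" using ne by blast
  define I where "I n = (c ^^ n) X0" for n
  have IF: "I n \<in> F" for n unfolding I_def by (induction n) (simp_all add: X0 c)
  have "\<forall>n. submod regmod (I n) \<and> I (Suc n) \<subset> I n"
  proof
    fix n show "submod regmod (I n) \<and> I (Suc n) \<subset> I n"
      using IF[of n] l c[OF IF[of n]] unfolding submod_reg I_def by simp
  qed
  then show False using art unfolding artinian_def by blast
qed

definition INTL :: "'r set list \<Rightarrow> 'r set" where "INTL ms = {r. \<forall>m\<in>set ms. r \<in> m}"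

lemma INTL_lid: "\<forall>m\<in>set ms. maxlid m \<Longrightarrow> lid (INTL (ms :: 'r::ring_1 set list))"
proof -
  assume a: "\<forall>m\<in>set ms. maxlid m"
  then have l: "\<And>m. m \<in> set ms \<Longrightarrow> lid m" using maxlid_lid by blast
  show ?thesis unfolding lid_def INTL_def
  proof (intro conjI ballI allI impI CollectI)
    fix m assume "m \<in> set ms" then show "0 \<in> m" using l lid_0 by blast
  next
    fix x y m assume "x \<in> {r. \<forall>m\<in>set ms. r \<in> m}" "y \<in> {r. \<forall>m\<in>set ms. r \<in> m}" "m \<in> set ms"
    then show "x + y \<in> m" using l[of m] lid_add[of m x y] by blast
  next
    fix r x m assume "x \<in> {r. \<forall>m\<in>set ms. r \<in> m}" "m \<in> set ms"
    then show "r * x \<in> m" using l[of m] lid_mult[of m x r] by blast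
  qed
qed

lemma INTL_Cons: "INTL (m # ms) = m \<inter> INTL ms" unfolding INTL_def by auto

lemma finite_J: assumes art: "artinian (regmod :: ('r::ring_1, 'r) lmod)"
  shows "\<exists>ms. (\<forall>m\<in>set ms. maxlid m) \<and> INTL ms \<subseteq> (Jr :: 'r set)"
proof -
  define F where "F = {INTL ms | ms :: 'r set list. \<forall>m\<in>set ms. maxlid m}"
  have "INTL [] \<in> F" unfolding F_def by force
  then have ne: "F \<noteq> {}" by blast
  have l: "\<forall>X\<in>F. lid X" unfolding F_def using INTL_lid by blast
  obtain X where X: "X \<in> F" "\<forall>Y\<in>F. Y \<subseteq> X \<longrightarrow> Y = X" using artin_min[OF art ne l] by blast
  obtain ms where ms: "X = INTL ms" "\<forall>m\<in>set ms. maxlid m" using X(1) unfolding F_def by blast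
  have "X \<subseteq> Jr" unfolding Jr_def
  proof (intro subsetI CollectI allI impI)
    fix r m assume r: "r \<in> X" and m: "maxlid (m :: 'r set)"
    have "INTL (m # ms) \<in> F" unfolding F_def using ms(2) m by force
    moreover have "INTL (m # ms) \<subseteq> X" unfolding INTL_Cons ms(1) by blast
    ultimately have "INTL (m # ms) = X" using X(2) by blast
    then show "r \<in> m" using r unfolding INTL_Cons by blast
  qed
  then show ?thesis using ms by blast
qed

abbreviation rspan :: "'r::ring_1 set \<Rightarrow> 'r set" where "rspan X \<equiv> span (regmod :: ('r, 'r) lmod) X"

lemma rspan_lid: "lid (rspan X)" using span_submod[OF lmodule_reg] unfolding submod_reg .
lemma rspan_sup: "X \<subseteq> rspan X" using span_sup[OF lmodule_reg, of X] by simp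
lemma rspan_least: "lid N \<Longrightarrow> X \<subseteq> N \<Longrightarrow> rspan X \<subseteq> N" using span_least[of regmod N X] unfolding submod_reg by blast
lemma rspan_mono: "X \<subseteq> Y \<Longrightarrow> rspan X \<subseteq> rspan Y" using rspan_least[OF rspan_lid] rspan_sup by blast

definition Pk :: "nat \<Rightarrow> 'r::ring_1 set" where
  "Pk k = {prod_list js | js. length js = k \<and> set js \<subseteq> Jr}"

lemma Pk_Suc: assumes "k \<ge> 1" shows "Pk (Suc k) \<subseteq> (Pk k :: 'r::ring_1 set)"
proof
  fix p :: 'r assume "p \<in> Pk (Suc k)"
  then obtain js where js: "p = prod_list js" "length js = Suc k" "set js \<subseteq> Jr" unfolding Pk_def by blast
  obtain j1 js' where j1: "js = j1 # js'" using js(2) by (cases js) auto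
  then have "length js' = k" using js(2) by simp
  then obtain j2 rest where "js' = j2 # rest" using assms by (cases js') auto
  then have js2: "js = j1 # j2 # rest" using j1 by simp
  have "p = prod_list ((j1 * j2) # rest)" using js(1) js2 by (simp add: mult.assoc)
  moreover have "length ((j1 * j2) # rest) = k" using js(2) js2 by simp
  moreover have "set ((j1 * j2) # rest) \<subseteq> Jr" using js(3) js2 Jr_right by auto
  ultimately show "p \<in> Pk k" unfolding Pk_def by blast
qed

lemma Pk_J: assumes "k \<ge> 1" shows "Pk k \<subseteq> (Jr :: 'r::ring_1 set)"
proof
  fix p :: 'r assume "p \<in> Pk k"
  then obtain js where js: "p = prod_list js" "length js = k" "set js \<subseteq> Jr" unfolding Pk_def by blast
  then obtain j1 rest where js2: "js = j1 # rest" using assms by (cases js) auto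
  have "p = j1 * prod_list rest" using js(1) js2 by simp
  moreover have "j1 \<in> Jr" using js(3) js2 by simp
  ultimately show "p \<in> Jr" using Jr_right by blast
qed

lemma Pk_double: "Pk (k + k) \<subseteq> {p * q | p q. p \<in> Pk k \<and> q \<in> (Pk k :: 'r::ring_1 set)}"
proof
  fix x :: 'r assume "x \<in> Pk (k + k)"
  then obtain js where js: "x = prod_list js" "length js = k + k" "set js \<subseteq> Jr" unfolding Pk_def by blast
  have "x = prod_list (take k js) * prod_list (drop k js)" using js(1) prod_list.append[of "take k js" "drop k js"] by simp
  moreover have "prod_list (take k js) \<in> Pk k" unfolding Pk_def using js(2,3) set_take_subset[of k js]
    by (intro CollectI exI[of _ "take k js"]) auto
  moreover have "prod_list (drop k js) \<in> Pk k" unfolding Pk_def using js(2,3) set_drop_subset[of k js]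
    by (intro CollectI exI[of _ "drop k js"]) auto
  ultimately show "x \<in> {p * q | p q. p \<in> Pk k \<and> q \<in> Pk k}" by blast
qed

lemma cyc_lid: "lid {r * (a::'r::ring_1) | r. True}"
  unfolding lid_def
proof (intro conjI ballI allI)
  have "(0::'r) = 0 * a" by simp
  then show "0 \<in> {r * a | r. True}" by blast
next
  fix x y assume "x \<in> {r * a | r. True}" "y \<in> {r * a | r. True}"
  then obtain r1 r2 where "x = r1 * a" "y = r2 * a" by blast
  then have "x + y = (r1 + r2) * a" by (simp add: distrib_right)
  then show "x + y \<in> {r * a | r. True}" by blast
next
  fix s x assume "x \<in> {r * a | r. True}"
  then obtain r1 where "x = r1 * a" by blast
  then have "s * x = (s * r1) * a" by (simp add: mult.assoc)
  then show "s * x \<in> {r * a | r. True}" by blast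
qed

lemma ann_lid: "lid {x. x * (a::'r::ring_1) = 0}"
  unfolding lid_def by (simp add: distrib_right mult.assoc)

lemma Ia_lid: assumes "lid I" shows "lid {i * (a::'r::ring_1) | i. i \<in> I}"
  unfolding lid_def
proof (intro conjI ballI allI)
  have "(0::'r) = 0 * a" by simp
  then show "0 \<in> {i * a | i. i \<in> I}" using lid_0[OF assms] by blast
next
  fix x y assume "x \<in> {i * a | i. i \<in> I}" "y \<in> {i * a | i. i \<in> I}"
  then obtain r1 r2 where "x = r1 * a" "y = r2 * a" "r1 \<in> I" "r2 \<in> I" by blast
  then have "x + y = (r1 + r2) * a" "r1 + r2 \<in> I" using lid_add[OF assms] by (auto simp add: distrib_right)
  then show "x + y \<in> {i * a | i. i \<in> I}" by blast
next
  fix s x assume "x \<in> {i * a | i. i \<in> I}"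
  then obtain r1 where "x = r1 * a" "r1 \<in> I" by blast
  then have "s * x = (s * r1) * a" "s * r1 \<in> I" using lid_mult[OF assms] by (auto simp add: mult.assoc)
  then show "s * x \<in> {i * a | i. i \<in> I}" by blast
qed

lemma J_nilpotent: assumes art: "artinian (regmod :: ('r::ring_1, 'r) lmod)"
  shows "\<exists>K. K \<ge> 1 \<and> (Pk K :: 'r set) \<subseteq> {0}"
proof -
  define D where "D n = rspan (Pk (Suc n) :: 'r set)" for n
  have Ddec: "D (Suc n) \<subseteq> D n" for n unfolding D_def by (rule rspan_mono[OF Pk_Suc]) simp
  have Dmono: "m \<ge> k \<Longrightarrow> D m \<subseteq> D k" for m k
  proof (induction m rule: dec_induct)
    case base then show ?case by simp
  next
    case (step m) then show ?case using Ddec[of m] by blast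
  qed
  have ne: "range D \<noteq> {}" by simp
  have l: "\<forall>X\<in>range D. lid X" unfolding D_def using rspan_lid by blast
  obtain X where X: "X \<in> range D" "\<forall>Y\<in>range D. Y \<subseteq> X \<longrightarrow> Y = X" using artin_min[OF art ne l] by blast
  obtain k where k: "X = D k" using X(1) by blast
  define K where "K = Suc k"
  have K1: "K \<ge> 1" unfolding K_def by simp
  have eqK: "rspan (Pk (K + K)) = rspan (Pk K :: 'r set)"
  proof -
    have "D (Suc (k + k)) \<subseteq> D k" by (rule Dmono) simp
    then have "D (Suc (k + k)) = D k" using X(2) k by blast
    then show ?thesis unfolding D_def K_def by simp
  qed
  define I where "I = rspan (Pk K :: 'r set)"
  have lI: "lid I" unfolding I_def by (rule rspan_lid)
  have IJ: "I \<subseteq> Jr" unfolding I_def by (rule rspan_least[OF Jr_lid Pk_J[OF K1]])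
  have "I \<subseteq> {0}"
  proof (rule ccontr)
    assume "\<not> I \<subseteq> {0}"
    then obtain i0 where i0: "i0 \<in> I" "i0 \<noteq> 0" by blast
    define F where "F = {L. lid L \<and> (\<exists>i\<in>I. \<exists>l\<in>L. i * l \<noteq> (0::'r))}"
    have "i0 * 1 \<noteq> 0" using i0 by simp
    then have "UNIV \<in> F" unfolding F_def using lid_univ i0(1) by blast
    then have neF: "F \<noteq> {}" by blast
    have lF: "\<forall>X\<in>F. lid X" unfolding F_def by blast
    obtain L where L: "L \<in> F" "\<forall>Y\<in>F. Y \<subseteq> L \<longrightarrow> Y = L" using artin_min[OF art neF lF] by blast
    obtain i1 a where ia: "i1 \<in> I" "a \<in> L" "i1 * a \<noteq> 0" using L(1) unfolding F_def by blast
    have lL: "lid L" using L(1) unfolding F_def by blast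
    have "{r * a | r. True} \<subseteq> L" using lid_mult[OF lL ia(2)] by blast
    moreover have "{r * a | r. True} \<in> F"
    proof -
      have "a = 1 * a" by simp
      then have "a \<in> {r * a | r. True}" by blast
      then show ?thesis unfolding F_def using cyc_lid ia by blast
    qed
    ultimately have La: "{r * a | r. True} = L" using L(2) by blast
    have IaL: "{i * a | i. i \<in> I} \<subseteq> L" using La by blast
    have "{i * a | i. i \<in> I} \<in> F"
    proof (rule ccontr)
      assume nF: "{i * a | i. i \<in> I} \<notin> F"
      have "\<forall>p\<in>Pk K. \<forall>q\<in>Pk K. p * (q * a) = 0"
      proof (intro ballI)
        fix p q :: 'r assume pq: "p \<in> Pk K" "q \<in> Pk K"
        have "p \<in> I" "q \<in> I" using pq rspan_sup unfolding I_def by blast+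
        then show "p * (q * a) = 0" using nF Ia_lid[OF lI, of a] unfolding F_def by blast
      qed
      then have "Pk (K + K) \<subseteq> {x. x * a = 0}" using Pk_double[of K] by (auto simp: mult.assoc)
      then have "rspan (Pk (K + K)) \<subseteq> {x. x * a = 0}" by (rule rspan_least[OF ann_lid])
      then have "I \<subseteq> {x. x * a = 0}" unfolding I_def eqK .
      then show False using ia by blast
    qed
    then have "{i * a | i. i \<in> I} = L" using L(2) IaL by blast
    then obtain j where j: "j \<in> I" "a = j * a" using ia(2) by blast
    obtain u where u: "u * (1 - j) = 1" using Jr_unit IJ j(1) by blast
    have "a = u * ((1 - j) * a)" using u by (simp add: mult.assoc[symmetric])
    also have "(1 - j) * a = 0" using j(2) by (simp add: left_diff_distrib)
    finally have "a = 0" by simp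
    then show False using ia(3) by simp
  qed
  moreover have "Pk K \<subseteq> I" unfolding I_def by (rule rspan_sup)
  ultimately show ?thesis using K1 by blast
qed

lemma J_span_mult: assumes "x \<in> rspan X" "j \<in> Jr"
  shows "j * x \<in> rspan {j' * y | j' y. j' \<in> Jr \<and> y \<in> (X :: 'r::ring_1 set)}"
proof -
  define T where "T = rspan {j' * y | j' y. j' \<in> Jr \<and> y \<in> X}"
  have lT: "lid T" unfolding T_def by (rule rspan_lid)
  define Y where "Y = {x. \<forall>j\<in>Jr. j * x \<in> T}"
  have "lid Y" unfolding lid_def Y_def
  proof (intro conjI ballI allI CollectI)
    fix j :: 'r assume "j \<in> Jr" then show "j * 0 \<in> T" using lid_0[OF lT] by simp
  next
    fix x y j :: 'r assume "x \<in> {x. \<forall>j\<in>Jr. j * x \<in> T}" "y \<in> {x. \<forall>j\<in>Jr. j * x \<in> T}" "j \<in> Jr"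
    then have "j * x \<in> T" "j * y \<in> T" by auto
    then show "j * (x + y) \<in> T" using lid_add[OF lT] by (simp add: distrib_left)
  next
    fix r x j :: 'r assume "x \<in> {x. \<forall>j\<in>Jr. j * x \<in> T}" "j \<in> Jr"
    then have "(j * r) * x \<in> T" using Jr_right by blast
    then show "j * (r * x) \<in> T" by (simp add: mult.assoc)
  qed
  moreover have "X \<subseteq> Y"
  proof
    fix x assume x: "x \<in> X"
    have "\<forall>j\<in>Jr. j * x \<in> T"
    proof
      fix j :: 'r assume "j \<in> Jr"
      then have "j * x \<in> {j' * y | j' y. j' \<in> Jr \<and> y \<in> X}" using x by blast
      then show "j * x \<in> T" unfolding T_def using rspan_sup[of "{j' * y | j' y. j' \<in> Jr \<and> y \<in> X}"] by blast
    qed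
    then show "x \<in> Y" unfolding Y_def by simp
  qed
  ultimately have "rspan X \<subseteq> Y" by (rule rspan_least)
  then have "x \<in> Y" using assms(1) by blast
  then show ?thesis using assms(2) unfolding Y_def T_def by blast
qed

lemma PkR: assumes lR: "lid R" and sR: "R \<subseteq> rspan {j * r | j r. j \<in> Jr \<and> r \<in> (R :: 'r::ring_1 set)}"
  shows "R \<subseteq> rspan {p * r | p r. p \<in> Pk k \<and> r \<in> R}"
proof (induction k)
  case 0
  have "R \<subseteq> {p * r | p r. p \<in> Pk 0 \<and> r \<in> R}"
  proof
    fix x assume "x \<in> R"
    moreover have "x = prod_list [] * x" by simp
    moreover have "prod_list [] \<in> (Pk 0 :: 'r set)" unfolding Pk_def by force
    ultimately show "x \<in> {p * r | p r. p \<in> Pk 0 \<and> r \<in> R}" by blast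
  qed
  then show ?case using rspan_sup[of "{p * r | p r. p \<in> Pk 0 \<and> r \<in> R}"] by (rule order_trans)
next
  case (Suc k)
  have "{j * r | j r. j \<in> Jr \<and> r \<in> R} \<subseteq> rspan {p * r | p r. p \<in> Pk (Suc k) \<and> r \<in> R}"
  proof
    fix x assume "x \<in> {j * r | j r. j \<in> Jr \<and> r \<in> R}"
    then obtain j r where jr: "x = j * r" "j \<in> Jr" "r \<in> R" by blast
    have "r \<in> rspan {p * r | p r. p \<in> Pk k \<and> r \<in> R}" using Suc jr(3) by blast
    then have "x \<in> rspan {j' * y | j' y. j' \<in> Jr \<and> y \<in> {p * r | p r. p \<in> Pk k \<and> r \<in> R}}"
      unfolding jr(1) by (rule J_span_mult[OF _ jr(2)])
    moreover have "{j' * y | j' y. j' \<in> Jr \<and> y \<in> {p * r | p r. p \<in> Pk k \<and> r \<in> R}} \<subseteq> {p * r | p r. p \<in> Pk (Suc k) \<and> r \<in> R}"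
    proof
      fix z assume "z \<in> {j' * y | j' y. j' \<in> Jr \<and> y \<in> {p * r | p r. p \<in> Pk k \<and> r \<in> R}}"
      then obtain j' p r' where z: "z = j' * (p * r')" "j' \<in> Jr" "p \<in> Pk k" "r' \<in> R" by blast
      then obtain js where js: "p = prod_list js" "length js = k" "set js \<subseteq> Jr" unfolding Pk_def by blast
      have "j' * p \<in> Pk (Suc k)" unfolding Pk_def using js z(2)
        by (intro CollectI exI[of _ "j' # js"]) simp
      moreover have "z = (j' * p) * r'" using z(1) by (simp add: mult.assoc)
      ultimately show "z \<in> {p * r | p r. p \<in> Pk (Suc k) \<and> r \<in> R}" using z(4) by blast
    qed
    ultimately show "x \<in> rspan {p * r | p r. p \<in> Pk (Suc k) \<and> r \<in> R}" using rspan_mono by blast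
  qed
  then have "rspan {j * r | j r. j \<in> Jr \<and> r \<in> R} \<subseteq> rspan {p * r | p r. p \<in> Pk (Suc k) \<and> r \<in> R}"
    by (rule rspan_least[OF rspan_lid])
  then show ?case using sR by blast
qed

lemma no_JR: assumes art: "artinian (regmod :: ('r::ring_1, 'r) lmod)" and lR: "lid R"
  and sR: "R \<subseteq> rspan {j * r | j r. j \<in> Jr \<and> r \<in> (R :: 'r set)}"
  shows "R \<subseteq> {0}"
proof -
  obtain K where K: "Pk K \<subseteq> ({0} :: 'r set)" using J_nilpotent[OF art] by blast
  have "{p * r | p r. p \<in> Pk K \<and> r \<in> R} \<subseteq> {0}" using K by auto
  moreover have "lid ({0} :: 'r set)" unfolding lid_def by simp
  ultimately have "rspan {p * r | p r. p \<in> Pk K \<and> r \<in> R} \<subseteq> {0}" by (rule rspan_least[rotated])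
  then show ?thesis using PkR[OF lR sR, of K] by blast
qed

lemma has_maxsub: assumes art: "artinian (regmod :: ('r::ring_1, 'r) lmod)" and lN: "lid N" and nz: "N \<noteq> {0}"
  shows "\<exists>L. maxsub (sub (regmod :: ('r, 'r) lmod) N) L"
proof -
  define JN where "JN = {j * r | j r. j \<in> Jr \<and> r \<in> (N :: 'r set)}"
  define B where "B = rspan JN"
  have JNN: "JN \<subseteq> N" unfolding JN_def using lid_mult[OF lN] by blast
  have BN: "B \<subseteq> N" unfolding B_def by (rule rspan_least[OF lN JNN])
  have lB: "lid B" unfolding B_def by (rule rspan_lid)
  have "\<not> N \<subseteq> B"
  proof
    assume "N \<subseteq> B"
    then have "N \<subseteq> {0}" using no_JR[OF art lN] unfolding B_def JN_def by blast
    then show False using nz lid_0[OF lN] by blast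
  qed
  then obtain x where x: "x \<in> N" "x \<notin> B" by blast
  obtain L where L: "lid L" "B \<subseteq> L" "L \<subseteq> N" "x \<notin> L"
    and Lmax: "\<forall>L'. lid L' \<and> L \<subseteq> L' \<and> L' \<subseteq> N \<and> x \<notin> L' \<longrightarrow> L' = L"
    using lid_zorn[OF lB BN x(2)] by blast
  have alpha: "\<exists>l c. l \<in> L \<and> x = l + c * u" if u: "u \<in> N" "u \<notin> L" for u
  proof -
    define L' where "L' = {a + c * u | a c. a \<in> L}"
    have lL': "lid L'" unfolding L'_def by (rule lid_plus_cyc[OF L(1)])
    have LL': "L \<subseteq> L'"
    proof
      fix z assume z: "z \<in> L"
      have "z = z + 0 * u" by simp
      then show "z \<in> L'" unfolding L'_def using z by blast
    qed
    have L'N: "L' \<subseteq> N"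
    proof
      fix z assume "z \<in> L'"
      then obtain a c where "z = a + c * u" "a \<in> L" unfolding L'_def by blast
      then show "z \<in> N" using L(3) lid_add[OF lN] lid_mult[OF lN u(1)] by blast
    qed
    have uL': "u \<in> L'"
    proof -
      have "u = 0 + 1 * u" by simp
      then show ?thesis unfolding L'_def using lid_0[OF L(1)] by blast
    qed
    have "x \<in> L'"
    proof (rule ccontr)
      assume "x \<notin> L'"
      then have "L' = L" using Lmax lL' LL' L'N by blast
      then show False using uL' u(2) by blast
    qed
    then show ?thesis unfolding L'_def by blast
  qed
  define W where "W = {l + c * x | l c. l \<in> L}"
  have W_add: "a \<in> W \<Longrightarrow> b \<in> W \<Longrightarrow> a + b \<in> W" for a b
  proof -
    assume "a \<in> W" "b \<in> W"
    then obtain l1 c1 l2 c2 where "a = l1 + c1 * x" "l1 \<in> L" "b = l2 + c2 * x" "l2 \<in> L" unfolding W_def by blast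
    then have "a + b = (l1 + l2) + (c1 + c2) * x" "l1 + l2 \<in> L" using lid_add[OF L(1)] by (auto simp: algebra_simps)
    then show "a + b \<in> W" unfolding W_def by blast
  qed
  have W_L: "l \<in> L \<Longrightarrow> l \<in> W" for l
  proof -
    assume "l \<in> L"
    moreover have "l = l + 0 * x" by simp
    ultimately show "l \<in> W" unfolding W_def by blast
  qed
  have G: "\<forall>y. y \<in> N \<longrightarrow> (\<forall>r\<in>INTL ms. r * y \<in> L) \<longrightarrow> y \<in> W" if "\<forall>m\<in>set ms. maxlid m" for ms
    using that
  proof (induction ms)
    case Nil
    show ?case
    proof (intro allI impI)
      fix y assume "y \<in> N" "\<forall>r\<in>INTL []. r * y \<in> L"
      then have "\<forall>r. r * y \<in> L" unfolding INTL_def by simp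
      then have "1 * y \<in> L" by blast
      then have "y \<in> L" by simp
      then show "y \<in> W" using W_L by simp
    qed
  next
    case (Cons m ms)
    have m: "maxlid m" using Cons.prems by simp
    have ms: "\<forall>m\<in>set ms. maxlid m" using Cons.prems by simp
    have IH: "\<And>y. y \<in> N \<Longrightarrow> (\<forall>r\<in>INTL ms. r * y \<in> L) \<Longrightarrow> y \<in> W" using Cons.IH[OF ms] by blast
    have lm: "lid m" by (rule maxlid_lid[OF m])
    have lB': "lid (INTL ms)" by (rule INTL_lid[OF ms])
    show ?case
    proof (intro allI impI)
      fix y assume y: "y \<in> N" "\<forall>r\<in>INTL (m # ms). r * y \<in> L"
      have hy: "\<And>r. r \<in> m \<Longrightarrow> r \<in> INTL ms \<Longrightarrow> r * y \<in> L" using y(2) unfolding INTL_Cons by blast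
      show "y \<in> W"
      proof (cases "INTL ms \<subseteq> m")
        case True
        then show ?thesis using IH[OF y(1)] hy by blast
      next
        case False
        then obtain b0 where b0: "b0 \<in> INTL ms" "b0 \<notin> m" by blast
        obtain a c where ac: "a \<in> m" "1 = a + c * b0" using maxlid_gen[OF m b0(2)] by blast
        define b' where "b' = c * b0"
        have b'B: "b' \<in> INTL ms" unfolding b'_def using lid_mult[OF lB' b0(1)] .
        have ab: "a + b' = 1" using ac(2) unfolding b'_def by simp
        have u1: "a * y \<in> W"
        proof (rule IH)
          show "a * y \<in> N" using lid_mult[OF lN y(1)] .
          show "\<forall>r\<in>INTL ms. r * (a * y) \<in> L"
          proof
            fix r assume r: "r \<in> INTL ms"
            have "r * a \<in> m" using lid_mult[OF lm ac(1)] .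
            moreover have "r * a = r - r * b'" using ab by (metis add_diff_cancel_right' distrib_left mult.right_neutral)
            moreover have "r - r * b' \<in> INTL ms" using lid_diff[OF lB' r lid_mult[OF lB' b'B]] .
            ultimately have "(r * a) * y \<in> L" using hy by simp
            then show "r * (a * y) \<in> L" by (simp add: mult.assoc)
          qed
        qed
        have u2: "b' * y \<in> W"
        proof (cases "b' * y \<in> L")
          case True then show ?thesis using W_L by simp
        next
          case False
          have u2N: "b' * y \<in> N" using lid_mult[OF lN y(1)] .
          have ann: "\<And>r. r \<in> m \<Longrightarrow> r * (b' * y) \<in> L"
          proof -
            fix r assume r: "r \<in> m"
            have "r * b' \<in> INTL ms" using lid_mult[OF lB' b'B] .
            moreover have "r * b' = r - r * a" using ab by (metis add_diff_cancel_left' distrib_left mult.right_neutral)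
            moreover have "r - r * a \<in> m" using lid_diff[OF lm r lid_mult[OF lm ac(1)]] .
            ultimately have "(r * b') * y \<in> L" using hy by simp
            then show "r * (b' * y) \<in> L" by (simp add: mult.assoc)
          qed
          obtain l s where ls: "l \<in> L" "x = l + s * (b' * y)" using alpha[OF u2N False] by blast
          have "s \<notin> m"
          proof
            assume "s \<in> m"
            then have "s * (b' * y) \<in> L" using ann by blast
            then have "x \<in> L" using ls lid_add[OF L(1)] by simp
            then show False using L(4) by simp
          qed
          then obtain a2 c2 where ac2: "a2 \<in> m" "1 = a2 + c2 * s" using maxlid_gen[OF m] by blast
          have "b' * y = a2 * (b' * y) + c2 * (s * (b' * y))"
          proof -
            have "b' * y = (a2 + c2 * s) * (b' * y)" using ac2(2) by simp
            then show ?thesis by (simp add: distrib_right mult.assoc)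
          qed
          also have "s * (b' * y) = x - l" using ls(2) by simp
          finally have e: "b' * y = (a2 * (b' * y) - c2 * l) + c2 * x" by (simp add: algebra_simps)
          have "a2 * (b' * y) - c2 * l \<in> L" using lid_diff[OF L(1) ann[OF ac2(1)] lid_mult[OF L(1) ls(1)]] .
          then show ?thesis unfolding W_def using e by blast
        qed
        have "y = a * y + b' * y" using ab by (metis distrib_right mult_1)
        then show ?thesis using W_add[OF u1 u2] by simp
      qed
    qed
  qed
  obtain ms0 :: "'r set list" where ms0: "\<forall>m\<in>set ms0. maxlid m" "INTL ms0 \<subseteq> Jr" using finite_J[OF art] by blast
  have NW: "N \<subseteq> W"
  proof
    fix y assume y: "y \<in> N"
    have "\<forall>r\<in>INTL ms0. r * y \<in> L"
    proof
      fix r assume "r \<in> INTL ms0"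
      then have "r \<in> Jr" using ms0(2) by blast
      then have "r * y \<in> JN" unfolding JN_def using y by blast
      then show "r * y \<in> L" using rspan_sup[of JN] L(2) unfolding B_def by blast
    qed
    then show "y \<in> W" using G[OF ms0(1)] y by blast
  qed
  have "maxsub (sub regmod N) L"
    unfolding maxsub_def sub_simps submod_subreg
  proof (intro conjI allI impI)
    show "lid L" "L \<subseteq> N" using L by auto
    show "L \<noteq> N" using L(4) x(1) by blast
    fix L2 assume a: "(lid L2 \<and> L2 \<subseteq> N) \<and> L \<subseteq> L2"
    show "L2 = L \<or> L2 = N"
    proof (cases "L2 = L")
      case True then show ?thesis by simp
    next
      case False
      then obtain z where z: "z \<in> L2" "z \<notin> L" using a by blast
      have zN: "z \<in> N" using z a by blast
      obtain l c where lc: "l \<in> L" "x = l + c * z" using alpha[OF zN z(2)] by blast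
      have xL2: "x \<in> L2" using lc a z(1) lid_add lid_mult by (metis subsetD)
      have "W \<subseteq> L2"
      proof
        fix w assume "w \<in> W"
        then obtain l' c' where "w = l' + c' * x" "l' \<in> L" unfolding W_def by blast
        then show "w \<in> L2" using a xL2 lid_add lid_mult by (metis subsetD)
      qed
      then show ?thesis using NW a by blast
    qed
  qed
  then show ?thesis by blast
qed

lemma reg_attained: assumes art: "artinian (regmod :: ('r::ring_1, 'r) lmod)"
  shows "\<exists>i. tS S (sub (regmod :: ('r, 'r) lmod) ((rad_tS S regmod ^^ i) (mcarrier regmod))) = {mzero regmod}"
proof -
  define I where "I n = (rad_tS S (regmod :: ('r, 'r) lmod) ^^ n) (mcarrier regmod)" for n
  have sI: "submod regmod (I n)" for n unfolding I_def by (rule phi_iter_submod[OF lmodule_reg])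
  have dec: "I (Suc n) \<subseteq> tS S (sub regmod (I n))" "tS S (sub regmod (I n)) \<subseteq> I n" for n
    using phi_props(2,3)[OF lmodule_reg sI[of n]] unfolding I_def by simp_all
  have "\<exists>n. I (Suc n) = I n"
  proof (rule ccontr)
    assume "\<not> (\<exists>n. I (Suc n) = I n)"
    then have "\<forall>n. submod regmod (I n) \<and> I (Suc n) \<subset> I n" using sI dec by blast
    then show False using art unfolding artinian_def by blast
  qed
  then obtain n where n: "I (Suc n) = I n" by blast
  define N where "N = I n"
  have T: "tS S (sub regmod N) = N" using dec[of n] n unfolding N_def by blast
  have R: "rad (sub regmod N) = N"
  proof -
    have "I (Suc n) = rad_tS S regmod (I n)" unfolding I_def by simp
    then have "rad (sub regmod (tS S (sub regmod N))) = N" unfolding rad_tS_def N_def using n by simp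
    then show ?thesis using T by simp
  qed
  have lN: "lid N" using sI[of n] unfolding N_def submod_reg .
  have "N = {0}"
  proof (rule ccontr)
    assume "N \<noteq> {0}"
    then obtain L where L: "maxsub (sub regmod N) L" using has_maxsub[OF art lN] by blast
    then have "rad (sub regmod N) \<subseteq> L" by (rule rad_le_maxsub)
    moreover have "L \<subseteq> N" "L \<noteq> N" using L unfolding maxsub_def submod_subreg by auto
    ultimately show False using R by blast
  qed
  then have "tS S (sub regmod (I n)) = {mzero regmod}" using T unfolding N_def by simp
  then show ?thesis unfolding I_def by blast
qed

definition trans :: "('r, 'm) lmod \<Rightarrow> ('m \<Rightarrow> 'n) \<Rightarrow> ('r, 'n) lmod" where
  "trans N e = \<lparr>mcarrier = e ` mcarrier N,
     madd = \<lambda>a b. e (madd N (inv_into (mcarrier N) e a) (inv_into (mcarrier N) e b)),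
     mzero = e (mzero N),
     msmult = \<lambda>r a. e (msmult N r (inv_into (mcarrier N) e a))\<rparr>"

lemma trans_simps: "mcarrier (trans N e) = e ` mcarrier N" "mzero (trans N e) = e (mzero N)"
  "madd (trans N e) a b = e (madd N (inv_into (mcarrier N) e a) (inv_into (mcarrier N) e b))"
  "msmult (trans N e) r a = e (msmult N r (inv_into (mcarrier N) e a))"
  by (simp_all add: trans_def)

context fixes N :: "('r::ring_1, 'm) lmod" and e :: "'m \<Rightarrow> 'n"
  assumes LN: "lmodule N" and inj: "inj_on e (mcarrier N)"
begin

lemma ie_e[simp]: "x \<in> mcarrier N \<Longrightarrow> inv_into (mcarrier N) e (e x) = x"
  using inj by (simp add: inv_into_f_f)

lemma trans_lmodule: "lmodule (trans N e)"
  unfolding lmodule_def trans_simps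
  apply (intro conjI ballI allI; (elim imageE)?)
  using LN apply (simp_all add: lm_assoc lm_neg lm_sdistl lm_sdistr lm_smass)
  apply (rule arg_cong[where f=e])
  apply (rule lm_comm[OF LN])
  by auto

lemma trans_hom: "lhom N (trans N e) e"
  unfolding lhom_def trans_simps using LN by auto

lemma trans_inv_hom: "lhom (trans N e) N (inv_into (mcarrier N) e)"
  unfolding lhom_def trans_simps using LN by auto

end

definition freeM :: "nat \<Rightarrow> ('r::ring_1, nat \<Rightarrow> 'r) lmod" where
  "freeM n = \<lparr>mcarrier = {v. \<forall>i\<ge>n. v i = 0}, madd = \<lambda>v w i. v i + w i, mzero = \<lambda>i. 0,
     msmult = \<lambda>r v i. r * v i\<rparr>"

lemma freeM_simps[simp]: "mcarrier (freeM n) = {v. \<forall>i\<ge>n. v i = 0}" "madd (freeM n) = (\<lambda>v w i. v i + w i)"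
  "mzero (freeM n) = (\<lambda>i. 0)" "msmult (freeM n) = (\<lambda>r v i. r * v i)"
  by (simp_all add: freeM_def)

lemma freeM_lmodule: "lmodule (freeM n :: ('r::ring_1, nat \<Rightarrow> 'r) lmod)"
  unfolding lmodule_def by (simp add: algebra_simps)

fun lc :: "('r::ring_1, 'm) lmod \<Rightarrow> 'm list \<Rightarrow> (nat \<Rightarrow> 'r) \<Rightarrow> nat \<Rightarrow> 'm" where
  "lc N as v 0 = mzero N"
| "lc N as v (Suc k) = madd N (lc N as v k) (msmult N (v k) (as ! k))"

lemma lc_in: assumes "submod N Y" "set as \<subseteq> Y" shows "k \<le> length as \<Longrightarrow> lc N as v k \<in> Y"
proof (induction k)
  case 0 then show ?case using assms(1) unfolding submod_def by simp
next
  case (Suc k)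
  then have "as ! k \<in> Y" using assms(2) by (simp add: subset_iff)
  then show ?case using Suc assms(1) unfolding submod_def by simp
qed

lemma lc_add: assumes LN: "lmodule N" and A: "set as \<subseteq> mcarrier N"
  shows "k \<le> length as \<Longrightarrow> lc N as (\<lambda>i. v i + w i) k = madd N (lc N as v k) (lc N as w k)"
proof (induction k)
  case 0 then show ?case using LN by simp
next
  case (Suc k)
  have ak: "as ! k \<in> mcarrier N" using Suc.prems A by (simp add: subset_iff)
  have c: "lc N as v k \<in> mcarrier N" "lc N as w k \<in> mcarrier N"
    using lc_in[OF carrier_submod[OF LN] A] Suc.prems by auto
  have "lc N as (\<lambda>i. v i + w i) (Suc k) = madd N (madd N (lc N as v k) (lc N as w k)) (madd N (msmult N (v k) (as ! k)) (msmult N (w k) (as ! k)))"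
    using Suc lm_sdistr[OF LN ak] by simp
  also have "\<dots> = madd N (madd N (lc N as v k) (msmult N (v k) (as ! k))) (madd N (lc N as w k) (msmult N (w k) (as ! k)))"
    by (rule lm_add4[OF LN c(1) c(2)]) (use LN ak in simp)+
  finally show ?case by simp
qed

lemma lc_smult: assumes LN: "lmodule N" and A: "set as \<subseteq> mcarrier N"
  shows "k \<le> length as \<Longrightarrow> lc N as (\<lambda>i. r * v i) k = msmult N r (lc N as v k)"
proof (induction k)
  case 0 then show ?case using LN msmult_zero_zero[OF LN] by simp
next
  case (Suc k)
  have ak: "as ! k \<in> mcarrier N" using Suc.prems A by (simp add: subset_iff)
  have c: "lc N as v k \<in> mcarrier N"
    using lc_in[OF carrier_submod[OF LN] A] Suc.prems by auto
  show ?case using Suc lm_sdistl[OF LN c] lm_smass[OF LN ak] LN ak by simp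
qed

lemma lc_unit: assumes LN: "lmodule N" and A: "set as \<subseteq> mcarrier N"
  shows "k \<le> length as \<Longrightarrow> lc N as (\<lambda>i. if i = j then 1 else 0) k = (if j < k then as ! j else mzero N)"
proof (induction k)
  case 0 then show ?case by simp
next
  case (Suc k)
  have ak: "as ! k \<in> mcarrier N" using Suc.prems A by (simp add: subset_iff)
  show ?case
  proof (cases "k = j")
    case True then show ?thesis using Suc LN ak by simp
  next
    case False
    have "lc N as (\<lambda>i. if i = j then 1 else 0) k \<in> mcarrier N"
      using lc_in[OF carrier_submod[OF LN] A] Suc.prems by auto
    then show ?thesis using Suc False LN ak by simp
  qed
qed

lemma lc_free: "k \<le> n \<Longrightarrow> lc (freeM n) (map (\<lambda>j i. if i = j then (1::'r::ring_1) else 0) [0..<n]) v k = (\<lambda>i. if i < k then v i else 0)"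
proof (induction k)
  case 0 then show ?case by simp
next
  case (Suc k)
  then show ?case by (auto simp: fun_eq_iff less_Suc_eq)
qed

lemma freeM_fin_gen: "fin_gen (freeM n :: ('r::ring_1, nat \<Rightarrow> 'r) lmod)"
proof -
  define E :: "(nat \<Rightarrow> 'r) list" where "E = map (\<lambda>j i. if i = j then (1::'r) else 0) [0..<n]"
  have Ec: "set E \<subseteq> mcarrier (freeM n)" unfolding E_def by auto
  have "mcarrier (freeM n) \<subseteq> span (freeM n) (set E)"
  proof
    fix v :: "nat \<Rightarrow> 'r" assume v: "v \<in> mcarrier (freeM n)"
    have "lc (freeM n) E v n = (\<lambda>i. if i < n then v i else 0)" unfolding E_def by (rule lc_free) simp
    also have "\<dots> = v" using v by (auto simp: fun_eq_iff)
    finally have "v = lc (freeM n) E v n" by simp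
    moreover have "lc (freeM n) E v n \<in> span (freeM n) (set E)"
      by (rule lc_in[OF span_submod[OF freeM_lmodule] span_sup[OF freeM_lmodule Ec]]) (simp add: E_def)
    ultimately show "v \<in> span (freeM n) (set E)" by simp
  qed
  then have "span (freeM n) (set E) = mcarrier (freeM n)" using span_carrier[of "freeM n" "set E"] by (rule equalityI[rotated])
  then show ?thesis unfolding fin_gen_def using Ec by blast
qed

lemma fg_surj: assumes LP: "lmodule P" and fg: "fin_gen P"
  shows "\<exists>n \<pi>. lhom (freeM n :: ('r::ring_1, nat \<Rightarrow> 'r) lmod) (P :: ('r, 'p) lmod) \<pi> \<and> \<pi> ` mcarrier (freeM n) = mcarrier P"
proof -
  obtain A where A: "finite A" "A \<subseteq> mcarrier P" "span P A = mcarrier P" using fg unfolding fin_gen_def by blast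
  obtain as where as: "set as = A" using finite_list[OF A(1)] by blast
  define n where "n = length as"
  define \<pi> where "\<pi> v = lc P as v n" for v :: "nat \<Rightarrow> 'r"
  have asc: "set as \<subseteq> mcarrier P" using as A by simp
  have h: "lhom (freeM n) P \<pi>" unfolding lhom_def \<pi>_def
  proof (intro conjI ballI allI)
    fix v :: "nat \<Rightarrow> 'r" show "lc P as v n \<in> mcarrier P"
      by (rule lc_in[OF carrier_submod[OF LP] asc]) (simp add: n_def)
  next
    fix v w :: "nat \<Rightarrow> 'r"
    show "lc P as (madd (freeM n) v w) n = madd P (lc P as v n) (lc P as w n)"
      using lc_add[OF LP asc, of n v w] by (simp add: n_def)
  next
    fix r :: 'r and v :: "nat \<Rightarrow> 'r"
    show "lc P as (msmult (freeM n) r v) n = msmult P r (lc P as v n)"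
      using lc_smult[OF LP asc, of n r v] by (simp add: n_def)
  qed
  have "\<pi> ` mcarrier (freeM n) \<subseteq> mcarrier P" using lhom_in[OF h] by blast
  moreover have "mcarrier P \<subseteq> \<pi> ` mcarrier (freeM n)"
  proof -
    have s: "submod P (\<pi> ` mcarrier (freeM n))" by (rule lhom_image[OF freeM_lmodule LP h carrier_submod[OF freeM_lmodule]])
    have "A \<subseteq> \<pi> ` mcarrier (freeM n)"
    proof
      fix a assume "a \<in> A"
      then have "a \<in> set as" using as by simp
      then obtain j where j: "j < n" "a = as ! j" unfolding n_def in_set_conv_nth by blast
      have "\<pi> (\<lambda>i. if i = j then 1 else 0) = a" unfolding \<pi>_def using lc_unit[OF LP asc, of n j] j by (simp add: n_def)
      moreover have "(\<lambda>i. if i = j then (1::'r) else 0) \<in> mcarrier (freeM n)" using j by auto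
      ultimately show "a \<in> \<pi> ` mcarrier (freeM n)" by (rule image_eqI[OF sym])
    qed
    then have "span P A \<subseteq> \<pi> ` mcarrier (freeM n)" by (rule span_least[OF s])
    then show ?thesis using A(3) by simp
  qed
  ultimately show ?thesis using h by blast
qed

lemma e_inj: assumes "\<pi> ` mcarrier F = mcarrier P"
  shows "inj_on (\<lambda>x. {v \<in> mcarrier F. \<pi> v = x}) (mcarrier P)"
proof (rule inj_onI)
  fix x y assume x: "x \<in> mcarrier P" and y: "y \<in> mcarrier P"
    and eq: "{v \<in> mcarrier F. \<pi> v = x} = {v \<in> mcarrier F. \<pi> v = y}"
  obtain v where v: "v \<in> mcarrier F" "\<pi> v = x" using x assms by (metis imageE)
  then have "v \<in> {v \<in> mcarrier F. \<pi> v = y}" using eq by blast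
  then show "x = y" using v by simp
qed

lemma copy_exists: assumes LP: "lmodule (P :: ('r::ring_1, 'p) lmod)" and fg: "fin_gen P"
  shows "\<exists>(B :: 'r umod) e. lmodule B \<and> fin_gen B \<and> inj_on e (mcarrier P) \<and> lhom P B e \<and>
      lhom B P (inv_into (mcarrier P) e) \<and> e ` mcarrier P = mcarrier B"
proof -
  obtain n \<pi> where np: "lhom (freeM n :: ('r, nat \<Rightarrow> 'r) lmod) P \<pi>" "\<pi> ` mcarrier (freeM n) = mcarrier P"
    using fg_surj[OF LP fg] by blast
  define e where "e x = {v \<in> mcarrier (freeM n :: ('r, nat \<Rightarrow> 'r) lmod). \<pi> v = x}" for x
  have inj: "inj_on e (mcarrier P)" unfolding e_def by (rule e_inj[OF np(2)])
  define B where "B = trans P e"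
  have LB: "lmodule B" unfolding B_def by (rule trans_lmodule[OF LP inj])
  have h: "lhom P B e" unfolding B_def by (rule trans_hom[OF LP inj])
  have hi: "lhom B P (inv_into (mcarrier P) e)" unfolding B_def by (rule trans_inv_hom[OF LP inj])
  have im: "e ` mcarrier P = mcarrier B" unfolding B_def trans_simps ..
  have "fin_gen B" by (rule fin_gen_image[OF LP LB h im fg])
  then show ?thesis using LB inj h hi im by blast
qed

lemma proj_sep: assumes pr: "projective (P :: ('r::ring_1, 'p) lmod)"
  shows "\<forall>x\<in>mcarrier P. x \<noteq> mzero P \<longrightarrow> (\<exists>h. lhom P (regmod :: ('r, 'r) lmod) h \<and> h x \<noteq> 0)"
proof -
  have LP: "lmodule P" and fg: "fin_gen P" using pr unfolding projective_def by auto
  obtain n \<pi> where np: "lhom (freeM n :: ('r, nat \<Rightarrow> 'r) lmod) P \<pi>" "\<pi> ` mcarrier (freeM n) = mcarrier P"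
    using fg_surj[OF LP fg] by blast
  define F where "F = (freeM n :: ('r, nat \<Rightarrow> 'r) lmod)"
  have LF: "lmodule F" unfolding F_def by (rule freeM_lmodule)
  have fgF: "fin_gen F" unfolding F_def by (rule freeM_fin_gen)
  define e where "e x = {v \<in> mcarrier F. \<pi> v = x}" for x
  have inj: "inj_on e (mcarrier P)" unfolding e_def by (rule e_inj[OF np(2)[folded F_def]])
  define B where "B = trans P e"
  have LB: "lmodule B" unfolding B_def by (rule trans_lmodule[OF LP inj])
  have h: "lhom P B e" unfolding B_def by (rule trans_hom[OF LP inj])
  have imB: "e ` mcarrier P = mcarrier B" unfolding B_def trans_simps ..
  have fgB: "fin_gen B" by (rule fin_gen_image[OF LP LB h imB fg])
  define s where "s v = {v}" for v :: "nat \<Rightarrow> 'r"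
  have injs: "inj_on s (mcarrier F)" unfolding s_def by (simp add: inj_on_def)
  define A where "A = trans F s"
  have LA: "lmodule A" unfolding A_def by (rule trans_lmodule[OF LF injs])
  have hs: "lhom F A s" unfolding A_def by (rule trans_hom[OF LF injs])
  have his: "lhom A F (inv_into (mcarrier F) s)" unfolding A_def by (rule trans_inv_hom[OF LF injs])
  have imA: "s ` mcarrier F = mcarrier A" unfolding A_def trans_simps ..
  have fgA: "fin_gen A" by (rule fin_gen_image[OF LF LA hs imA fgF])
  define g where "g = e \<circ> (\<pi> \<circ> inv_into (mcarrier F) s)"
  have hg: "lhom A B g" unfolding g_def
    by (rule lhom_comp[OF lhom_comp[OF his np(1)[folded F_def]] h])
  have img: "g ` mcarrier A = mcarrier B"
  proof -
    have "inv_into (mcarrier F) s ` mcarrier A = mcarrier F" unfolding imA[symmetric]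
      using injs by (simp add: image_image)
    have "g ` mcarrier A = e ` (\<pi> ` (inv_into (mcarrier F) s ` mcarrier A))" unfolding g_def image_comp[symmetric] by (rule refl)
    then have "g ` mcarrier A = e ` (\<pi> ` mcarrier F)" using \<open>inv_into (mcarrier F) s ` mcarrier A = mcarrier F\<close> by simp
    also have "\<dots> = mcarrier B" using np(2) imB unfolding F_def by simp
    finally show ?thesis .
  qed
  have "\<exists>k. lhom P A k \<and> (\<forall>x\<in>mcarrier P. g (k x) = e x)"
    using pr LA fgA LB fgB hg img h unfolding projective_def A_def B_def by blast
  then obtain k where k: "lhom P A k" "\<forall>x\<in>mcarrier P. g (k x) = e x" by blast
  show ?thesis
  proof (intro ballI impI)
    fix x assume x: "x \<in> mcarrier P" "x \<noteq> mzero P"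
    define w where "w = inv_into (mcarrier F) s (k x)"
    have kx: "k x \<in> mcarrier A" using lhom_in[OF k(1) x(1)] .
    have wF: "w \<in> mcarrier F" unfolding w_def using lhom_in[OF his kx] .
    show "\<exists>h. lhom P regmod h \<and> h x \<noteq> 0"
    proof (rule ccontr)
      assume na: "\<not> (\<exists>h. lhom P regmod h \<and> h x \<noteq> 0)"
      have "w i = 0" for i
      proof -
        define c where "c = (\<lambda>y. (inv_into (mcarrier F) s (k y)) i)"
        have ev: "lhom F (regmod :: ('r, 'r) lmod) (\<lambda>v. v i)" unfolding lhom_def F_def by simp
        have "lhom P regmod c" unfolding c_def using lhom_comp[OF lhom_comp[OF k(1) his] ev] by (simp add: comp_def)
        then have "c x = 0" using na by blast
        then show ?thesis unfolding c_def w_def by simp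
      qed
      then have w0: "w = mzero F" unfolding F_def by (simp add: fun_eq_iff)
      have "k x = s w" unfolding w_def using kx imA by (metis f_inv_into_f)
      then have "k x = mzero A" unfolding A_def trans_simps using w0 by simp
      then have "g (k x) = mzero B" using lhom_zero[OF LA LB hg] by simp
      also have "mzero B = e (mzero P)" unfolding B_def trans_simps ..
      finally have "e x = e (mzero P)" using k(2) x(1) by simp
      then have "x = mzero P" using inj x(1) lm_zero[OF LP] by (meson inj_onD)
      then show False using x(2) by simp
    qed
  qed
qed

lemma simple_in_X: assumes sm: "simple_mod (S :: 'r::ring_1 umod)" and SS: "S \<in> \<S>"
  shows "in_X \<S> S"
proof -
  have LS: "lmodule S" using sm unfolding simple_mod_def by blast
  obtain s where s: "s \<in> mcarrier S" "s \<noteq> mzero S" using sm unfolding simple_mod_def using lm_zero[OF LS] by blast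
  have "span S {s} = mcarrier S"
  proof -
    have sub: "submod S (span S {s})" by (rule span_submod[OF LS])
    have "s \<in> span S {s}" using span_sup[OF LS, of "{s}"] s(1) by blast
    then have "span S {s} \<noteq> {mzero S}" using s(2) by blast
    then show ?thesis using sm sub unfolding simple_mod_def by blast
  qed
  then have fg: "fin_gen S" unfolding fin_gen_def using s(1) by (intro exI[of _ "{s}"]) simp
  define Xs where "Xs i = (if i = 0 then {mzero S} else mcarrier S)" for i :: nat
  have z: "submod S {mzero S}" unfolding submod_def using LS msmult_zero_zero[OF LS] by simp
  have "filt_in \<S> S" unfolding filt_in_def
  proof (intro exI[of _ "1::nat"] exI[of _ Xs] conjI allI impI)
    show "Xs 0 = {mzero S}" unfolding Xs_def by simp
    show "Xs 1 = mcarrier S" unfolding Xs_def by simp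
    fix i :: nat assume "i \<le> 1" then show "submod S (Xs i)" unfolding Xs_def using z carrier_submod[OF LS] by simp
  next
    fix i :: nat assume i: "i < 1"
    then have i0: "i = 0" by simp
    show "Xs i \<subseteq> Xs (Suc i)" unfolding Xs_def i0 using lm_zero[OF LS] by simp
    have h: "lhom (sub S (Xs (Suc i))) S id" unfolding Xs_def i0 lhom_def by simp
    have im: "id ` Xs (Suc i) = mcarrier S" unfolding Xs_def i0 by simp
    have k: "ker (sub S (Xs (Suc i))) S id = Xs i" unfolding Xs_def i0 ker_def using lm_zero[OF LS] by auto
    show "\<exists>S'\<in>\<S>. \<exists>f. lhom (sub S (Xs (Suc i))) S' f \<and> f ` Xs (Suc i) = mcarrier S' \<and> ker (sub S (Xs (Suc i))) S' f = Xs i"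
      using SS h im k by blast
  qed
  then show ?thesis unfolding in_X_def using LS fg by blast
qed

lemma K_rad: assumes LP: "lmodule P" and sK: "superfluous P K" shows "K \<subseteq> rad P"
proof -
  have K: "submod P K" using sK unfolding superfluous_def by blast
  have "K \<subseteq> L" if m: "maxsub P L" for L
  proof (rule ccontr)
    assume "\<not> K \<subseteq> L"
    then obtain k where k: "k \<in> K" "k \<notin> L" by blast
    have L: "submod P L" using m unfolding maxsub_def by blast
    have KL: "K \<union> L \<subseteq> mcarrier P" using K L submod_sub_carrier by blast
    have sp: "submod P (span P (K \<union> L))" by (rule span_submod[OF LP])
    have LS: "L \<subseteq> span P (K \<union> L)" "k \<in> span P (K \<union> L)" using span_sup[OF LP KL] k by blast+
    then have "span P (K \<union> L) = mcarrier P" using m sp k(2) unfolding maxsub_def by blast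
    then have "L = mcarrier P" using sK L unfolding superfluous_def by blast
    then show False using m unfolding maxsub_def by blast
  qed
  then show ?thesis unfolding rad_def using K submod_sub_carrier by blast
qed

lemma q_zero:
  fixes \<S> :: "('r::ring_1) umod set" and M :: "('r, 'm) lmod" and P :: "('r, 'p) lmod"
  assumes LM: "lmodule M" and simp: "\<forall>S\<in>\<S>. simple_mod S"
    and pc: "proj_cover P (sub M (tS \<S> M)) f"
    and SS: "S \<in> \<S>" and q: "lhom P S q"
  shows "\<forall>p\<in>mcarrier P. q p = mzero S"
proof (rule ccontr)
  assume "\<not> ?thesis"
  then obtain p0 where p0: "p0 \<in> mcarrier P" "q p0 \<noteq> mzero S" by blast
  define T where "T = tS \<S> M"
  have sT: "submod M T" unfolding T_def by (rule tS_submod[OF LM])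
  have LT: "lmodule (sub M T)" by (rule submod_module[OF LM sT])
  have Tc: "T \<subseteq> mcarrier M" using sT submod_sub_carrier by blast
  have pr: "projective P" and hf: "lhom P (sub M T) f" and sf: "f ` mcarrier P = T"
    and sup: "superfluous P (ker P (sub M T) f)" using pc unfolding proj_cover_def T_def by auto
  have LP: "lmodule P" using pr unfolding projective_def by blast
  have sm: "simple_mod S" using simp SS by blast
  have LS: "lmodule S" using sm unfolding simple_mod_def by blast
  have mz: "maxsub S {mzero S}"
    unfolding maxsub_def
  proof (intro conjI allI impI)
    show "submod S {mzero S}" unfolding submod_def using LS msmult_zero_zero[OF LS] by simp
    show "{mzero S} \<noteq> mcarrier S" using sm unfolding simple_mod_def by blast
    fix L assume "submod S L \<and> {mzero S} \<subseteq> L"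
    then show "L = {mzero S} \<or> L = mcarrier S" using sm unfolding simple_mod_def by blast
  qed
  define L where "L = {x \<in> mcarrier P. q x \<in> {mzero S}}"
  have "L \<noteq> mcarrier P" using p0 unfolding L_def by blast
  then have "maxsub P L" using pre_maxsub[OF LP LS q mz] unfolding L_def by blast
  then have radL: "rad P \<subseteq> L" by (rule rad_le_maxsub)
  have KL: "ker P (sub M T) f \<subseteq> L" using K_rad[OF LP sup] radL by blast
  have wd: "q p1 = q p2" if p: "p1 \<in> mcarrier P" "p2 \<in> mcarrier P" "f p1 = f p2" for p1 p2
  proof -
    define d where "d = madd P p1 (msmult P (-1) p2)"
    have dc: "d \<in> mcarrier P" unfolding d_def using LP p by simp
    have fp2: "f p2 \<in> mcarrier M" using lhom_in[OF hf p(2)] Tc by auto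
    have "f d = madd M (f p1) (msmult M (-1) (f p2))"
      unfolding d_def using lhom_add[OF hf p(1)] lhom_smult[OF hf p(2)] LP p by simp
    also have "\<dots> = mzero M" using p(3) lm_neg[OF LM fp2] by simp
    finally have "d \<in> ker P (sub M T) f" unfolding ker_def using dc by simp
    then have "q d = mzero S" using KL unfolding L_def by blast
    then have "madd S (q p1) (msmult S (-1) (q p2)) = mzero S"
      unfolding d_def using lhom_add[OF q p(1)] lhom_smult[OF q p(2)] LP p by simp
    then show ?thesis using lm_eq_diff[OF LS lhom_in[OF q p(1)] lhom_in[OF q p(2)]] by simp
  qed
  define q' where "q' m = q (SOME p. p \<in> mcarrier P \<and> f p = m)" for m
  have q'e: "q' (f p) = q p" if "p \<in> mcarrier P" for p
  proof -
    have "\<exists>p'. p' \<in> mcarrier P \<and> f p' = f p" using that by blast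
    then have "(SOME p'. p' \<in> mcarrier P \<and> f p' = f p) \<in> mcarrier P \<and> f (SOME p'. p' \<in> mcarrier P \<and> f p' = f p) = f p"
      by (rule someI_ex)
    then show ?thesis unfolding q'_def using wd that by blast
  qed
  have pre: "\<exists>p. p \<in> mcarrier P \<and> f p = m" if "m \<in> T" for m using that sf by blast
  have hq': "lhom (sub M T) S q'" unfolding lhom_def sub_simps
  proof (intro conjI ballI allI)
    fix m assume "m \<in> T"
    then obtain p where p: "p \<in> mcarrier P" "f p = m" using pre by blast
    then show "q' m \<in> mcarrier S" using q'e lhom_in[OF q p(1)] by metis
  next
    fix m1 m2 assume "m1 \<in> T" "m2 \<in> T"
    then obtain p1 p2 where p: "p1 \<in> mcarrier P" "f p1 = m1" "p2 \<in> mcarrier P" "f p2 = m2" using pre by blast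
    have "f (madd P p1 p2) = madd M m1 m2" using lhom_add[OF hf p(1,3)] p by simp
    moreover have "madd P p1 p2 \<in> mcarrier P" using LP p by simp
    ultimately have "q' (madd M m1 m2) = q (madd P p1 p2)" using q'e by metis
    also have "\<dots> = madd S (q p1) (q p2)" using lhom_add[OF q p(1,3)] .
    finally show "q' (madd M m1 m2) = madd S (q' m1) (q' m2)" using q'e p by metis
  next
    fix r m assume "m \<in> T"
    then obtain p where p: "p \<in> mcarrier P" "f p = m" using pre by blast
    have "f (msmult P r p) = msmult M r m" using lhom_smult[OF hf p(1)] p by simp
    moreover have "msmult P r p \<in> mcarrier P" using LP p by simp
    ultimately have "q' (msmult M r m) = q (msmult P r p)" using q'e by metis
    also have "\<dots> = msmult S r (q p)" using lhom_smult[OF q p(1)] .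
    finally show "q' (msmult M r m) = msmult S r (q' m)" using q'e p by metis
  qed
  have XS: "in_X \<S> S" by (rule simple_in_X[OF sm SS])
  have "GS \<S> M \<subseteq> ker (sub M T) S q'"
  proof
    fix y assume "y \<in> GS \<S> M"
    then obtain T' u t where T': "lmodule (T' :: 'r umod)" "fin_gen T'" "in_T \<S> T'" "lhom T' M u" "t \<in> mcarrier T'" "y = u t"
      by blast
    have "u ` mcarrier T' \<subseteq> GS \<S> M" using T' by blast
    then have "u ` mcarrier T' \<subseteq> T" using GS_tS[OF LM] unfolding T_def by blast
    then have "lhom T' (sub M T) u" by (rule lhom_sub_cod[OF T'(4)])
    then have "lhom T' S (q' \<circ> u)" using hq' by (rule lhom_comp)
    then have "(q' \<circ> u) t = mzero S" using T'(3,5) XS unfolding in_T_def by blast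
    moreover have "u t \<in> T" using \<open>u ` mcarrier T' \<subseteq> T\<close> T'(5) by blast
    ultimately show "y \<in> ker (sub M T) S q'" unfolding ker_def using T'(6) by simp
  qed
  moreover have "submod M (ker (sub M T) S q')"
    using ker_submod[OF LT LS hq'] submod_trans[OF sT] by blast
  ultimately have "T \<subseteq> ker (sub M T) S q'" unfolding T_def tS_def by (rule span_least[rotated])
  moreover have "f p0 \<in> T" using sf p0(1) by blast
  ultimately have "q' (f p0) = mzero S" unfolding ker_def by blast
  then show False using q'e[OF p0(1)] p0(2) by simp
qed

lemma P_in_T:
  fixes \<S> :: "('r::ring_1) umod set" and M :: "('r, 'm) lmod" and P :: "('r, 'p) lmod"
  assumes LM: "lmodule M" and simp: "\<forall>S\<in>\<S>. simple_mod S"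
    and pc: "proj_cover P (sub M (tS \<S> M)) f"
    and XX: "in_X \<S> (X :: 'r umod)" and g: "lhom P X g"
  shows "\<forall>x\<in>mcarrier P. g x = mzero X"
proof (rule ccontr)
  assume "\<not> ?thesis"
  then obtain x0 where x0: "x0 \<in> mcarrier P" "g x0 \<noteq> mzero X" by blast
  obtain n Xs where Xs: "Xs 0 = {mzero X}" "Xs n = mcarrier X" "\<forall>i\<le>n. submod X (Xs i)"
    "\<forall>i<n. Xs i \<subseteq> Xs (Suc i) \<and> (\<exists>S\<in>\<S>. \<exists>f. lhom (sub X (Xs (Suc i))) S f \<and> f ` Xs (Suc i) = mcarrier S \<and>
                    ker (sub X (Xs (Suc i))) S f = Xs i)"
    using XX[unfolded in_X_def, THEN conjunct2, THEN conjunct2, unfolded filt_in_def] by (elim exE conjE) (rule that)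
  define j where "j = (LEAST j. g ` mcarrier P \<subseteq> Xs j)"
  have gn: "g ` mcarrier P \<subseteq> Xs n" using lhom_in[OF g] Xs(2) by blast
  have jP: "g ` mcarrier P \<subseteq> Xs j" unfolding j_def by (rule LeastI[of "\<lambda>j. g ` mcarrier P \<subseteq> Xs j" n, OF gn])
  have jn: "j \<le> n" unfolding j_def by (rule Least_le[of "\<lambda>j. g ` mcarrier P \<subseteq> Xs j" n, OF gn])
  have "j \<noteq> 0"
  proof
    assume "j = 0" then have "g x0 \<in> {mzero X}" using jP x0(1) Xs(1) by blast
    then show False using x0(2) by simp
  qed
  then obtain i where i: "j = Suc i" by (cases j) auto
  have "\<not> g ` mcarrier P \<subseteq> Xs i" unfolding j_def using not_less_Least[of i "\<lambda>j. g ` mcarrier P \<subseteq> Xs j"]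
    using i j_def by simp
  then obtain y where y: "y \<in> mcarrier P" "g y \<notin> Xs i" by blast
  have iN: "i < n" using i jn by simp
  obtain S \<phi> where S: "S \<in> \<S>" "lhom (sub X (Xs (Suc i))) S \<phi>" "ker (sub X (Xs (Suc i))) S \<phi> = Xs i"
    using Xs(4) iN by blast
  have g2: "lhom P (sub X (Xs (Suc i))) g" by (rule lhom_sub_cod[OF g]) (use jP i in simp)
  have q: "lhom P S (\<phi> \<circ> g)" by (rule lhom_comp[OF g2 S(2)])
  have "(\<phi> \<circ> g) y = mzero S" using q_zero[OF LM simp pc S(1) q] y(1) by blast
  moreover have "g y \<in> Xs (Suc i)" using jP i y(1) by blast
  ultimately have "g y \<in> ker (sub X (Xs (Suc i))) S \<phi>" unfolding ker_def by simp
  then show False using S(3) y(2) by simp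
qed

lemma tS_P:
  fixes \<S> :: "('r::ring_1) umod set" and M :: "('r, 'm) lmod" and P :: "('r, 'p) lmod"
  assumes LM: "lmodule M" and simp: "\<forall>S\<in>\<S>. simple_mod S"
    and pc: "proj_cover P (sub M (tS \<S> M)) f"
  shows "tS \<S> P = mcarrier P"
proof -
  have pr: "projective P" using pc unfolding proj_cover_def by blast
  have LP: "lmodule P" and fg: "fin_gen P" using pr unfolding projective_def by auto
  obtain B e where B: "lmodule (B :: 'r umod)" "fin_gen B" "inj_on e (mcarrier P)" "lhom P B e"
      "lhom B P (inv_into (mcarrier P) e)" "e ` mcarrier P = mcarrier B"
    using copy_exists[OF LP fg] by blast
  have "in_T \<S> B" unfolding in_T_def
  proof (intro allI impI ballI)
    fix X :: "'r umod" and h b assume X: "in_X \<S> X" and h: "lhom B X h" and b: "b \<in> mcarrier B"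
    obtain x where x: "x \<in> mcarrier P" "b = e x" using b B(6) by blast
    have "lhom P X (h \<circ> e)" by (rule lhom_comp[OF B(4) h])
    then have "(h \<circ> e) x = mzero X" using P_in_T[OF LM simp pc X] x(1) by blast
    then show "h b = mzero X" using x by simp
  qed
  then have "inv_into (mcarrier P) e ` mcarrier B \<in> {f ` mcarrier T | (T :: 'r umod) f. lmodule T \<and> fin_gen T \<and> in_T \<S> T \<and> lhom T P f}"
    using B(1,2,5) by blast
  then have "inv_into (mcarrier P) e ` mcarrier B \<subseteq> GS \<S> P" by (rule Union_upper)
  moreover have "inv_into (mcarrier P) e ` mcarrier B = mcarrier P" unfolding B(6)[symmetric]
    using B(3) by (simp add: image_image)
  ultimately have "mcarrier P \<subseteq> tS \<S> P" using GS_tS[OF LP, of \<S>] by simp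
  then show ?thesis using tS_carrier[of \<S> P] by (rule equalityI[rotated])
qed

theorem lemma4p3:
  fixes \<S> :: "('r::ring_1) umod set"
    and M :: "('r, 'm) lmod"
    and P :: "('r, 'p) lmod"
    and f :: "'p \<Rightarrow> 'm"
  assumes "artinian (regmod :: ('r, 'r) lmod)"
    and "\<forall>S\<in>\<S>. simple_mod S"
    and "lmodule M" and "fin_gen M"
    and "tS \<S> M \<noteq> {mzero M}"
    and "proj_cover P (sub M (tS \<S> M)) f"
  shows "llt \<S> (sub P (ker P (sub M (tS \<S> M)) f)) + 1 \<le> llt \<S> (regmod :: ('r, 'r) lmod)"
proof -
  note art = assms(1) and simp = assms(2) and LM = assms(3) and nz = assms(5) and pc = assms(6)
  define T where "T = tS \<S> M"
  have sT: "submod M T" unfolding T_def by (rule tS_submod[OF LM])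
  have LT: "lmodule (sub M T)" by (rule submod_module[OF LM sT])
  have pr: "projective P" and hf: "lhom P (sub M T) f" and sf: "f ` mcarrier P = T"
    and sup: "superfluous P (ker P (sub M T) f)" using pc unfolding proj_cover_def T_def by auto
  have LP: "lmodule P" using pr unfolding projective_def by blast
  define K where "K = ker P (sub M T) f"
  have sK: "submod P K" unfolding K_def by (rule ker_submod[OF LP LT hf])
  define R where "R = rad P"
  have sR: "submod P R" unfolding R_def by (rule rad_submod[OF LP])
  have KR: "K \<subseteq> R" unfolding K_def R_def by (rule K_rad[OF LP sup])
  have tSP: "tS \<S> P = mcarrier P" by (rule tS_P[OF LM simp pc])
  have phi1: "rad_tS \<S> P (mcarrier P) = R" unfolding rad_tS_def R_def using tSP by simp
  define Q where "Q N i = (tS \<S> (sub N ((rad_tS \<S> N ^^ i) (mcarrier N))) = {mzero N})"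
    for N :: "('r, 'p) lmod" and i
  define QR where "QR i = (tS \<S> (sub (regmod :: ('r, 'r) lmod) ((rad_tS \<S> regmod ^^ i) (mcarrier regmod))) = {mzero regmod})" for i
  obtain i1 where "QR i1" using reg_attained[OF art, of \<S>] unfolding QR_def by blast
  then have QRi: "QR (llt \<S> regmod)" unfolding llt_def QR_def by (rule LeastI)
  define i0 where "i0 = llt \<S> (regmod :: ('r, 'r) lmod)"
  have sepP: "\<forall>x\<in>mcarrier P. x \<noteq> mzero P \<longrightarrow> (\<exists>h. lhom P (regmod :: ('r, 'r) lmod) h \<and> h x \<noteq> mzero regmod)"
    using proj_sep[OF pr] by simp
  have QP: "Q P i0" unfolding Q_def i0_def
    by (rule dom_lemma[OF LP lmodule_reg sepP QRi[unfolded QR_def]])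
  have "mcarrier P \<noteq> {mzero P}"
  proof
    assume c: "mcarrier P = {mzero P}"
    have "f (mzero P) = mzero M" using lhom_zero[OF LP LT hf] by simp
    then have "T = {mzero M}" using sf c by simp
    then show False using nz unfolding T_def by simp
  qed
  then have "i0 \<noteq> 0" using QP tSP unfolding Q_def by auto
  then obtain j where j: "i0 = Suc j" by (cases i0) auto
  have e1: "(rad_tS \<S> P ^^ Suc j) (mcarrier P) = (rad_tS \<S> P ^^ j) R"
    using phi1 by (simp add: funpow_Suc_right del: funpow.simps)
  have e2: "rad_tS \<S> (sub P R) = rad_tS \<S> P" unfolding rad_tS_def by (simp add: fun_eq_iff)
  have QRj: "tS \<S> (sub (sub P R) ((rad_tS \<S> (sub P R) ^^ j) (mcarrier (sub P R)))) = {mzero (sub P R)}"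
    using QP unfolding Q_def j e1 e2 by simp
  have LK: "lmodule (sub P K)" by (rule submod_module[OF LP sK])
  have LR: "lmodule (sub P R)" by (rule submod_module[OF LP sR])
  have sep: "\<forall>x\<in>mcarrier (sub P K). x \<noteq> mzero (sub P K) \<longrightarrow> (\<exists>h. lhom (sub P K) (sub P R) h \<and> h x \<noteq> mzero (sub P R))"
  proof (intro ballI impI)
    fix x assume "x \<in> mcarrier (sub P K)" "x \<noteq> mzero (sub P K)"
    moreover have "lhom (sub P K) (sub P R) id" unfolding lhom_def using KR by auto
    ultimately show "\<exists>h. lhom (sub P K) (sub P R) h \<and> h x \<noteq> mzero (sub P R)" by auto
  qed
  have QK: "tS \<S> (sub (sub P K) ((rad_tS \<S> (sub P K) ^^ j) (mcarrier (sub P K)))) = {mzero (sub P K)}"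
    by (rule dom_lemma[OF LK LR sep QRj])
  have "llt \<S> (sub P K) \<le> j" unfolding llt_def by (rule Least_le) (rule QK)
  then show ?thesis using j unfolding i0_def K_def T_def by simp
qed

end
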